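(* Let $G\in\mathcal C^\infty(\bar\Omega,\mathbb R^{3\times3}_{\mathrm{sym,pos}})$, $\bar{\mathcal G}=G(\cdot,0)$, and let $y_0\in\mathcal C^\infty(\bar\omega,\mathbb R^3)$ satisfy $(\nabla y_0)^{\mathsf T}\nabla y_0=\bar{\mathcal G}_{2\times2}$ and $((\nabla y_0)^{\mathsf T}\nabla\vec b_0)_{\mathrm{sym}}=\frac12\partial_3G(x',0)_{2\times2}$. Define $II(x)=\frac{x_3^2}2\nabla\vec b_0^{\mathsf T}\nabla\vec b_0+\nabla y_0^{\mathsf T}\nabla_{\mathrm{tan}}\vec d_0-\frac14 x_3^2\partial_{33}G(x',0)_{2\times2}$ with $\vec d_0=\frac{x_3^2}2\tilde d_0(x')$. Then $II=\frac{x_3^2}2\overline{II}(x')$, and for all $x'\in\omega$: $$\overline{II}_{\mathrm{sym}}=\nabla\vec b_0^{\mathsf T}\nabla\vec b_0+\big(\nabla y_0^{\mathsf T}\nabla\tilde d_0\big)_{\mathrm{sym}}-\frac12\partial_{33}G(x',0)_{2\times2}=\begin{bmatrix}R_{1313}&R_{1323}\\R_{1323}&R_{2323}\end{bmatrix}(x',0),$$ where $R_{ijkl}$ are the Riemann curvatures of $G$.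
   Context: $\omega\subset\mathbb R^2$ open, bounded, connected, Lipschitz; $\Omega=\omega\times(-1/2,1/2)$. $\vec b_0=(\nabla y_0)(\bar{\mathcal G}_{2\times2})^{-1}(\bar{\mathcal G}_{13},\bar{\mathcal G}_{23})^{\mathsf T}+\sqrt{\det\bar{\mathcal G}/\det\bar{\mathcal G}_{2\times2}}\,\frac{\partial_1y_0\times\partial_2y_0}{|\cdot|}$; $Q_0=[\partial_1y_0,\partial_2y_0,\vec b_0]$; $\tilde d_0=Q_0^{-\mathsf T}\big(\partial_3G(x',0)e_3-\frac12\partial_3G(x',0)_{33}e_3-[(\nabla\vec b_0)^{\mathsf T}\vec b_0;0]\big)$; $\nabla_{\mathrm{tan}}\vec d_0=[\partial_1\vec d_0,\partial_2\vec d_0]$. $\Gamma^i_{kl}=\frac12G^{im}(\partial_lG_{mk}+\partial_kG_{ml}-\partial_mG_{kl})$; $R_{iklm}=\frac12(\partial_{kl}G_{im}+\partial_{im}G_{kl}-\partial_{km}G_{il}-\partial_{il}G_{km})+G_{np}(\Gamma^n_{kl}\Gamma^p_{im}-\Gamma^n_{km}\Gamma^p_{il})$. *)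

theory Defs
  imports "HOL-Analysis.Analysis"
begin

definition partial :: "'n::finite \<Rightarrow> (real^'n \<Rightarrow> 'b::real_normed_vector) \<Rightarrow> real^'n \<Rightarrow> 'b" where
  "partial i f x = vector_derivative (\<lambda>t. f (x + t *\<^sub>R axis i 1)) (at 0)"

fun iter_partial :: "'n::finite list \<Rightarrow> (real^'n \<Rightarrow> 'b::real_normed_vector) \<Rightarrow> real^'n \<Rightarrow> 'b" where
  "iter_partial [] f = f"
| "iter_partial (i # is) f = partial i (iter_partial is f)"

definition smooth_on :: "(real^'n::finite) set \<Rightarrow> (real^'n \<Rightarrow> 'b::real_normed_vector) \<Rightarrow> bool" where
  "smooth_on U f \<longleftrightarrow>
     (\<forall>is. continuous_on U (iter_partial is f) \<and>
        (\<forall>i. \<forall>x\<in>U. ((\<lambda>t. iter_partial is f (x + t *\<^sub>R axis i 1))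
                        has_vector_derivative iter_partial (i # is) f x) (at 0)))"

definition smooth_on_closure :: "(real^'n::finite) set \<Rightarrow> (real^'n \<Rightarrow> 'b::real_normed_vector) \<Rightarrow> bool" where
  "smooth_on_closure S f \<longleftrightarrow> (\<exists>U. open U \<and> closure S \<subseteq> U \<and> smooth_on U f)"

definition lipschitz_boundary2 :: "(real^2) set \<Rightarrow> bool" where
  "lipschitz_boundary2 \<omega> \<longleftrightarrow>
     (\<forall>p\<in>frontier \<omega>. \<exists>r>0. \<exists>Q::real^2^2. orthogonal_matrix Q \<and>
        (\<exists>C f. C-lipschitz_on UNIV (f::real\<Rightarrow>real) \<and>
           \<omega> \<inter> ball p r = {x \<in> ball p r. (transpose Q *v (x - p))$2 < f ((transpose Q *v (x - p))$1)}))"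

definition emb :: "real^2 \<Rightarrow> real^3" where
  "emb x' = vector [x'$1, x'$2, 0]"

definition proj :: "real^3 \<Rightarrow> real^2" where
  "proj x = vector [x$1, x$2]"

definition cyl :: "(real^2) set \<Rightarrow> (real^3) set" where
  "cyl \<omega> = {x. proj x \<in> \<omega> \<and> -1/2 < x$3 \<and> x$3 < 1/2}"

definition idx :: "2 \<Rightarrow> 3" where
  "idx a = (if a = 1 then 1 else 2)"

definition blk2 :: "real^3^3 \<Rightarrow> real^2^2" where
  "blk2 M = (\<chi> a b. M $ idx a $ idx b)"

definition msym :: "real^'n^'n \<Rightarrow> real^'n^'n" where
  "msym M = (1/2) *\<^sub>R (M + transpose M)"

definition sym_pos_def :: "real^3^3 \<Rightarrow> bool" where
  "sym_pos_def M \<longleftrightarrow> transpose M = M \<and> (\<forall>v. v \<noteq> 0 \<longrightarrow> v \<bullet> (M *v v) > 0)"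

definition grad2 :: "(real^2 \<Rightarrow> real^3) \<Rightarrow> real^2 \<Rightarrow> real^2^3" where
  "grad2 f x' = (\<chi> r c. partial c f x' $ r)"

definition grad_tan :: "(real^3 \<Rightarrow> real^3) \<Rightarrow> real^3 \<Rightarrow> real^2^3" where
  "grad_tan f x = (\<chi> r c. partial (idx c) f x $ r)"

definition Gbar :: "(real^3 \<Rightarrow> real^3^3) \<Rightarrow> real^2 \<Rightarrow> real^3^3" where
  "Gbar G x' = G (emb x')"

definition b0 :: "(real^3 \<Rightarrow> real^3^3) \<Rightarrow> (real^2 \<Rightarrow> real^3) \<Rightarrow> real^2 \<Rightarrow> real^3" where
  "b0 G y0 x' =
     grad2 y0 x' *v (matrix_inv (blk2 (Gbar G x')) *v vector [Gbar G x' $ 1 $ 3, Gbar G x' $ 2 $ 3])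
     + sqrt (det (Gbar G x') / det (blk2 (Gbar G x')))
       *\<^sub>R ((cross3 (partial 1 y0 x') (partial 2 y0 x')) /\<^sub>R norm (cross3 (partial 1 y0 x') (partial 2 y0 x')))"

definition Q0 :: "(real^3 \<Rightarrow> real^3^3) \<Rightarrow> (real^2 \<Rightarrow> real^3) \<Rightarrow> real^2 \<Rightarrow> real^3^3" where
  "Q0 G y0 x' = (\<chi> r c. if c = 1 then partial 1 y0 x' $ r
                         else if c = 2 then partial 2 y0 x' $ r
                         else b0 G y0 x' $ r)"

definition dtil0 :: "(real^3 \<Rightarrow> real^3^3) \<Rightarrow> (real^2 \<Rightarrow> real^3) \<Rightarrow> real^2 \<Rightarrow> real^3" where
  "dtil0 G y0 x' =
     (let w = transpose (grad2 (b0 G y0) x') *v b0 G y0 x';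
          dG = partial 3 G (emb x')
      in matrix_inv (transpose (Q0 G y0 x')) *v
           (dG *v axis 3 1 - (1/2 * dG $ 3 $ 3) *\<^sub>R axis 3 1 - vector [w $ 1, w $ 2, 0]))"

definition d0 :: "(real^3 \<Rightarrow> real^3^3) \<Rightarrow> (real^2 \<Rightarrow> real^3) \<Rightarrow> real^3 \<Rightarrow> real^3" where
  "d0 G y0 x = (x $ 3 ^ 2 / 2) *\<^sub>R dtil0 G y0 (proj x)"

definition II :: "(real^3 \<Rightarrow> real^3^3) \<Rightarrow> (real^2 \<Rightarrow> real^3) \<Rightarrow> real^3 \<Rightarrow> real^2^2" where
  "II G y0 x =
     (x $ 3 ^ 2 / 2) *\<^sub>R (transpose (grad2 (b0 G y0) (proj x)) ** grad2 (b0 G y0) (proj x))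
     + transpose (grad2 y0 (proj x)) ** grad_tan (d0 G y0) x
     - (1/4 * x $ 3 ^ 2) *\<^sub>R blk2 (partial 3 (partial 3 G) (emb (proj x)))"

definition IIbar :: "(real^3 \<Rightarrow> real^3^3) \<Rightarrow> (real^2 \<Rightarrow> real^3) \<Rightarrow> real^2 \<Rightarrow> real^2^2" where
  "IIbar G y0 x' =
     transpose (grad2 (b0 G y0) x') ** grad2 (b0 G y0) x'
     + transpose (grad2 y0 x') ** grad2 (dtil0 G y0) x'
     - (1/2) *\<^sub>R blk2 (partial 3 (partial 3 G) (emb x'))"

definition Christoffel :: "(real^3 \<Rightarrow> real^3^3) \<Rightarrow> 3 \<Rightarrow> 3 \<Rightarrow> 3 \<Rightarrow> real^3 \<Rightarrow> real" where
  "Christoffel G i k l x =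
     (1/2) * (\<Sum>m\<in>UNIV. matrix_inv (G x) $ i $ m *
        (partial l G x $ m $ k + partial k G x $ m $ l - partial m G x $ k $ l))"

definition Riem :: "(real^3 \<Rightarrow> real^3^3) \<Rightarrow> 3 \<Rightarrow> 3 \<Rightarrow> 3 \<Rightarrow> 3 \<Rightarrow> real^3 \<Rightarrow> real" where
  "Riem G i k l m x =
     (1/2) * (partial k (partial l G) x $ i $ m + partial i (partial m G) x $ k $ l
              - partial k (partial m G) x $ i $ l - partial i (partial l G) x $ k $ m)
     + (\<Sum>n\<in>UNIV. \<Sum>p\<in>UNIV. G x $ n $ p *
          (Christoffel G n k l x * Christoffel G p i m x - Christoffel G n k m x * Christoffel G p i l x))"

definition Rmat :: "(real^3 \<Rightarrow> real^3^3) \<Rightarrow> real^3 \<Rightarrow> real^2^2" where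
  "Rmat G x = (\<chi> a b. if a = 1 \<and> b = 1 then Riem G 1 3 1 3 x
                       else if a = 2 \<and> b = 2 then Riem G 2 3 2 3 x
                       else Riem G 1 3 2 3 x)"

end

theory Submission
  imports Defs
begin

definition lineD :: "(real^'n::finite \<Rightarrow> 'b::real_normed_vector) \<Rightarrow> real^'n \<Rightarrow> 'n \<Rightarrow> 'b \<Rightarrow> bool" where
  "lineD f z c v \<longleftrightarrow> ((\<lambda>t. f (z + t *\<^sub>R axis c 1)) has_vector_derivative v) (at 0)"

lemma lineD_partial: "lineD f z c v \<Longrightarrow> partial c f z = v"
  unfolding lineD_def partial_def by (rule vector_derivative_at)

lemma smooth_lineD:
  assumes "smooth_on U f" "x \<in> U"
  shows "lineD (iter_partial is f) x i (iter_partial (i#is) f x)"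
  using assms unfolding smooth_on_def lineD_def by blast

lemma smooth_lineD0:
  assumes "smooth_on U f" "x \<in> U"
  shows "lineD f x i (partial i f x)"
  using smooth_lineD[OF assms, of "[]" i] by simp

lemma smooth_lineD1:
  assumes "smooth_on U f" "x \<in> U"
  shows "lineD (partial j f) x i (partial i (partial j f) x)"
  using smooth_lineD[OF assms, of "[j]" i] by simp

lemma smooth_cont:
  assumes "smooth_on U f"
  shows "continuous_on U (iter_partial is f)"
  using assms unfolding smooth_on_def by blast

lemma lineD_unique_eq:
  assumes W: "open W" "z \<in> W" and eq: "\<forall>y\<in>W. f y = g y"
    and f: "lineD f z c v" and g: "lineD g z c w"
  shows "v = w"
proof -
  let ?S = "{t::real. z + t *\<^sub>R axis c 1 \<in> W}"
  have cont: "continuous (at t) (\<lambda>t. z + t *\<^sub>R axis c 1)" for t :: real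
    by (intro continuous_intros)
  have "open ?S"
    using continuous_open_vimage[OF W(1) cont] by (simp add: vimage_def)
  have "((\<lambda>t. g (z + t *\<^sub>R axis c 1)) has_vector_derivative v) (at 0)"
    apply (rule has_vector_derivative_transform_within_open[OF f[unfolded lineD_def] \<open>open ?S\<close>])
    using W eq by auto
  then show ?thesis using g unfolding lineD_def using vector_derivative_unique_at by blast
qed

lemma lineD_nth: "lineD f z c v \<Longrightarrow> lineD (\<lambda>y. f y $ i) z c (v $ i)"
  unfolding lineD_def by (rule bounded_linear.has_vector_derivative[OF bounded_linear_vec_nth])

lemma lineD_inner:
  assumes "lineD f z c v" "lineD g z c w"
  shows "lineD (\<lambda>y. f y \<bullet> g y) z c (v \<bullet> g z + f z \<bullet> w)"
  using bounded_bilinear.has_vector_derivative[OF bounded_bilinear_inner assms[unfolded lineD_def]]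
  unfolding lineD_def by (simp add: algebra_simps)

lemma lineD_add: "lineD f z c v \<Longrightarrow> lineD g z c w \<Longrightarrow> lineD (\<lambda>y. f y + g y) z c (v + w)"
  unfolding lineD_def by (rule has_vector_derivative_add)

lemma lineD_diff: "lineD f z c v \<Longrightarrow> lineD g z c w \<Longrightarrow> lineD (\<lambda>y. f y - g y) z c (v - w)"
  unfolding lineD_def by (rule has_vector_derivative_diff)

lemma lineD_cmult: "lineD f z c v \<Longrightarrow> lineD (\<lambda>y. k *\<^sub>R f y) z c (k *\<^sub>R v)"
  unfolding lineD_def by (rule bounded_linear.has_vector_derivative[OF bounded_linear_scaleR_right])

lemma emb_line: "emb (z + t *\<^sub>R axis c 1) = emb z + t *\<^sub>R axis (idx c) 1"
  using exhaust_2[of c] by (auto simp add: emb_def idx_def vec_eq_iff forall_3 axis_def)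

lemma lineD_emb: "lineD f (emb z) (idx c) v \<Longrightarrow> lineD (\<lambda>y. f (emb y)) z c v"
  unfolding lineD_def emb_line .

lemma lineD_shift: "lineD f (p + w) e v \<Longrightarrow> lineD (\<lambda>q. f (q + w)) p e v"
  unfolding lineD_def by (simp add: algebra_simps)

lemma line_mvt:
  fixes f :: "real^'n::finite \<Rightarrow> real"
  assumes h: "0 < h" and d: "\<forall>s\<in>{0..h}. lineD f (y + s *\<^sub>R axis e 1) e (fe (y + s *\<^sub>R axis e 1))"
  shows "\<exists>s. 0 < s \<and> s < h \<and> f (y + h *\<^sub>R axis e 1) - f y = h * fe (y + s *\<^sub>R axis e 1)"
proof -
  have "((\<lambda>s. f (y + s *\<^sub>R axis e 1)) has_real_derivative fe (y + s *\<^sub>R axis e 1)) (at s)"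
    if "0 \<le> s" "s \<le> h" for s
  proof -
    have "((\<lambda>t. f (y + s *\<^sub>R axis e 1 + t *\<^sub>R axis e 1)) has_real_derivative fe (y + s *\<^sub>R axis e 1)) (at 0)"
      using d that unfolding lineD_def has_real_derivative_iff_has_vector_derivative by auto
    then have "((\<lambda>t. f (y + (t + s) *\<^sub>R axis e 1)) has_real_derivative fe (y + s *\<^sub>R axis e 1)) (at 0)"
      by (simp add: algebra_simps)
    then show ?thesis using DERIV_shift[of "\<lambda>s. f (y + s *\<^sub>R axis e 1)" _ 0 s] by simp
  qed
  from MVT2[OF h this] obtain z where "0 < z" "z < h"
    "f (y + h *\<^sub>R axis e 1) - f (y + 0 *\<^sub>R axis e 1) = (h - 0) * fe (y + z *\<^sub>R axis e 1)"
    by blast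
  then show ?thesis by auto
qed

lemma schwarz_real:
  fixes f :: "real^'n::finite \<Rightarrow> real"
  assumes U: "open U" "x \<in> U"
   and fi: "\<forall>y\<in>U. lineD f y i (fi y)" and fj: "\<forall>y\<in>U. lineD f y j (fj y)"
   and fij: "\<forall>y\<in>U. lineD fi y j (fij y)" and fji: "\<forall>y\<in>U. lineD fj y i (fji y)"
   and c1: "continuous_on U fij" and c2: "continuous_on U fji"
  shows "fij x = fji x"
proof (cases "i = j")
  case True
  have "\<forall>y\<in>U. fi y = fj y" using fi fj True unfolding lineD_def
    using vector_derivative_unique_at by blast
  then show ?thesis using lineD_unique_eq[OF U _ _] fij fji True U by metis
next
  case ij: False
  define ei where "ei = (axis i 1 :: real^'n)"
  define ej where "ej = (axis j 1 :: real^'n)"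
  have nei: "norm ei = 1" and nej: "norm ej = 1" by (simp_all add: ei_def ej_def)
  obtain r where r: "r > 0" "ball x r \<subseteq> U" using U openE by blast
  have key: "\<exists>p q. dist p x < 2*h \<and> dist q x < 2*h \<and> fij p = fji q" if h: "0 < h" "2*h < r" for h
  proof -
    have inU: "x + s *\<^sub>R ei + u *\<^sub>R ej \<in> U" if "0 \<le> s" "s \<le> h" "0 \<le> u" "u \<le> h" for s u
    proof -
      have "norm (s *\<^sub>R ei + u *\<^sub>R ej) \<le> norm (s *\<^sub>R ei) + norm (u *\<^sub>R ej)" by (rule norm_triangle_ineq)
      also have "\<dots> = s + u" using nei nej that by simp
      finally have "dist (x + s *\<^sub>R ei + u *\<^sub>R ej) x < r" using that h by (simp add: dist_norm)
      then show ?thesis using r by (auto simp: dist_commute)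
    qed
    have dist2: "dist (x + s *\<^sub>R ei + u *\<^sub>R ej) x < 2*h" if "0 < s" "s < h" "0 < u" "u < h" for s u
    proof -
      have "norm (s *\<^sub>R ei + u *\<^sub>R ej) \<le> norm (s *\<^sub>R ei) + norm (u *\<^sub>R ej)" by (rule norm_triangle_ineq)
      also have "\<dots> = s + u" using nei nej that by simp
      finally show ?thesis using that by (simp add: dist_norm)
    qed
    define D where "D = f (x + h *\<^sub>R ei + h *\<^sub>R ej) - f (x + h *\<^sub>R ei) - f (x + h *\<^sub>R ej) + f x"
    have "\<exists>s. 0 < s \<and> s < h \<and> (\<lambda>p. f (p + h *\<^sub>R ej) - f p) (x + h *\<^sub>R ei) - (\<lambda>p. f (p + h *\<^sub>R ej) - f p) x
          = h * ((\<lambda>p. fi (p + h *\<^sub>R ej) - fi p) (x + s *\<^sub>R ei))"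
      unfolding ei_def
    proof (rule line_mvt[OF h(1)], intro ballI lineD_diff lineD_shift)
      fix s assume "s \<in> {0..h}"
      then show "lineD f (x + s *\<^sub>R axis i 1 + h *\<^sub>R ej) i (fi (x + s *\<^sub>R axis i 1 + h *\<^sub>R ej))"
        "lineD f (x + s *\<^sub>R axis i 1) i (fi (x + s *\<^sub>R axis i 1))"
        using fi inU[of s h] inU[of s 0] h unfolding ei_def by auto
    qed
    then obtain s where s: "0 < s" "s < h" "D = h * (fi (x + s *\<^sub>R ei + h *\<^sub>R ej) - fi (x + s *\<^sub>R ei))"
      unfolding D_def by (auto simp: algebra_simps)
    have "\<exists>u. 0 < u \<and> u < h \<and> fi (x + s *\<^sub>R ei + h *\<^sub>R ej) - fi (x + s *\<^sub>R ei) = h * fij (x + s *\<^sub>R ei + u *\<^sub>R ej)"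
      unfolding ej_def
      by (rule line_mvt[OF h(1)]) (use fij inU[of s] s in \<open>auto simp: ej_def\<close>)
    then obtain u where u: "0 < u" "u < h" "D = h * (h * fij (x + s *\<^sub>R ei + u *\<^sub>R ej))"
      using s by auto
    have "\<exists>s. 0 < s \<and> s < h \<and> (\<lambda>p. f (p + h *\<^sub>R ei) - f p) (x + h *\<^sub>R ej) - (\<lambda>p. f (p + h *\<^sub>R ei) - f p) x
          = h * ((\<lambda>p. fj (p + h *\<^sub>R ei) - fj p) (x + s *\<^sub>R ej))"
      unfolding ej_def
    proof (rule line_mvt[OF h(1)], intro ballI lineD_diff lineD_shift)
      fix s assume "s \<in> {0..h}"
      then show "lineD f (x + s *\<^sub>R axis j 1 + h *\<^sub>R ei) j (fj (x + s *\<^sub>R axis j 1 + h *\<^sub>R ei))"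
        "lineD f (x + s *\<^sub>R axis j 1) j (fj (x + s *\<^sub>R axis j 1))"
        using fj inU[of h s] inU[of 0 s] h unfolding ej_def by (auto simp: algebra_simps)
    qed
    then obtain s' where s': "0 < s'" "s' < h" "D = h * (fj (x + s' *\<^sub>R ej + h *\<^sub>R ei) - fj (x + s' *\<^sub>R ej))"
      unfolding D_def by (auto simp: algebra_simps)
    have "\<exists>u. 0 < u \<and> u < h \<and> fj (x + s' *\<^sub>R ej + h *\<^sub>R ei) - fj (x + s' *\<^sub>R ej) = h * fji (x + s' *\<^sub>R ej + u *\<^sub>R ei)"
      unfolding ei_def
      by (rule line_mvt[OF h(1)]) (use fji inU[of _ s'] s' in \<open>auto simp: ei_def algebra_simps\<close>)
    then obtain u' where u': "0 < u'" "u' < h" "D = h * (h * fji (x + s' *\<^sub>R ej + u' *\<^sub>R ei))"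
      using s' by auto
    have "fij (x + s *\<^sub>R ei + u *\<^sub>R ej) = fji (x + u' *\<^sub>R ei + s' *\<^sub>R ej)"
      using u u' h by (auto simp: algebra_simps)
    then show ?thesis using dist2[OF s(1,2) u(1,2)] dist2[OF u'(1,2) s'(1,2)] by blast
  qed
  show ?thesis
  proof (rule ccontr)
    assume ne: "fij x \<noteq> fji x"
    define e where "e = \<bar>fij x - fji x\<bar> / 2"
    have e: "e > 0" using ne by (simp add: e_def)
    have ca: "continuous (at x) fij" "continuous (at x) fji"
      using c1 c2 U continuous_on_eq_continuous_at by blast+
    obtain d1 where d1: "d1 > 0" "\<forall>y. dist y x < d1 \<longrightarrow> dist (fij y) (fij x) < e"
      using ca(1) e unfolding continuous_at_eps_delta by blast
    obtain d2 where d2: "d2 > 0" "\<forall>y. dist y x < d2 \<longrightarrow> dist (fji y) (fji x) < e"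
      using ca(2) e unfolding continuous_at_eps_delta by blast
    define h where "h = min (min d1 d2) r / 4"
    have h: "0 < h" "2*h < r" "2*h < d1" "2*h < d2" using d1 d2 r by (auto simp: h_def)
    obtain p q where pq: "dist p x < 2*h" "dist q x < 2*h" "fij p = fji q" using key[OF h(1,2)] by blast
    have "dist (fij p) (fij x) < e" using d1(2)[rule_format, of p] pq(1) h(3) by linarith
    moreover have "dist (fji q) (fji x) < e" using d2(2)[rule_format, of q] pq(2) h(4) by linarith
    ultimately have "dist (fij p) (fij x) < e" "dist (fji q) (fji x) < e" by auto
    then have "\<bar>fij x - fji x\<bar> < 2 * e" using pq(3) by (simp add: dist_real_def)
    then show False by (simp add: e_def)
  qed
qed

lemma continuous_on_nth: "continuous_on U g \<Longrightarrow> continuous_on U (\<lambda>y. g y $ r)"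
  unfolding continuous_on_def by (auto intro: tendsto_vec_nth)

lemma lineD_nth2: "lineD f z c v \<Longrightarrow> lineD (\<lambda>y. f y $ i $ j) z c (v $ i $ j)"
  using lineD_nth[OF lineD_nth[of f z c v i], of j] by simp

lemma schwarz_mat:
  fixes f :: "real^'n::finite \<Rightarrow> real^'m::finite^'k::finite"
  assumes sm: "smooth_on U f" and U: "open U" "x \<in> U"
  shows "partial j (partial i f) x = partial i (partial j f) x"
proof -
  have "partial j (partial i f) x $ r $ s = partial i (partial j f) x $ r $ s" for r s
  proof (rule schwarz_real[OF U, where f="\<lambda>y. f y $ r $ s"
          and fi="\<lambda>y. partial i f y $ r $ s" and fj="\<lambda>y. partial j f y $ r $ s"])
    show "\<forall>y\<in>U. lineD (\<lambda>y. f y $ r $ s) y i (partial i f y $ r $ s)"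
      by (auto intro!: lineD_nth2 smooth_lineD0[OF sm])
    show "\<forall>y\<in>U. lineD (\<lambda>y. f y $ r $ s) y j (partial j f y $ r $ s)"
      by (auto intro!: lineD_nth2 smooth_lineD0[OF sm])
    show "\<forall>y\<in>U. lineD (\<lambda>y. partial i f y $ r $ s) y j (partial j (partial i f) y $ r $ s)"
      by (auto intro!: lineD_nth2 smooth_lineD1[OF sm])
    show "\<forall>y\<in>U. lineD (\<lambda>y. partial j f y $ r $ s) y i (partial i (partial j f) y $ r $ s)"
      by (auto intro!: lineD_nth2 smooth_lineD1[OF sm])
    show "continuous_on U (\<lambda>y. partial j (partial i f) y $ r $ s)"
      using smooth_cont[OF sm, of "[j,i]"] by (simp add: continuous_on_nth)
    show "continuous_on U (\<lambda>y. partial i (partial j f) y $ r $ s)"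
      using smooth_cont[OF sm, of "[i,j]"] by (simp add: continuous_on_nth)
  qed
  then show ?thesis by (simp add: vec_eq_iff)
qed

lemma schwarz_vec:
  fixes f :: "real^'n::finite \<Rightarrow> real^'m::finite"
  assumes sm: "smooth_on U f" and U: "open U" "x \<in> U"
  shows "partial j (partial i f) x = partial i (partial j f) x"
proof -
  have "partial j (partial i f) x $ r = partial i (partial j f) x $ r" for r
  proof (rule schwarz_real[OF U, where f="\<lambda>y. f y $ r"
          and fi="\<lambda>y. partial i f y $ r" and fj="\<lambda>y. partial j f y $ r"])
    show "\<forall>y\<in>U. lineD (\<lambda>y. f y $ r) y i (partial i f y $ r)"
      using smooth_lineD0[OF sm] by (blast intro: lineD_nth)
    show "\<forall>y\<in>U. lineD (\<lambda>y. f y $ r) y j (partial j f y $ r)"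
      using smooth_lineD0[OF sm] by (blast intro: lineD_nth)
    show "\<forall>y\<in>U. lineD (\<lambda>y. partial i f y $ r) y j (partial j (partial i f) y $ r)"
      using smooth_lineD1[OF sm] by (blast intro: lineD_nth)
    show "\<forall>y\<in>U. lineD (\<lambda>y. partial j f y $ r) y i (partial i (partial j f) y $ r)"
      using smooth_lineD1[OF sm] by (blast intro: lineD_nth)
    show "continuous_on U (\<lambda>y. partial j (partial i f) y $ r)"
      using smooth_cont[OF sm, of "[j,i]"] by (simp add: continuous_on_nth)
    show "continuous_on U (\<lambda>y. partial i (partial j f) y $ r)"
      using smooth_cont[OF sm, of "[i,j]"] by (simp add: continuous_on_nth)
  qed
  then show ?thesis by (simp add: vec_eq_iff)
qed

lemma bounded_linear_transpose: "bounded_linear (transpose :: real^'n::finite^'m::finite \<Rightarrow> real^'m^'n)"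
  unfolding linear_conv_bounded_linear[symmetric]
  by (rule linearI) (simp_all add: transpose_def vec_eq_iff)

lemma lineD_transpose_sym:
  fixes f :: "real^'n::finite \<Rightarrow> real^'m::finite^'m"
  assumes W: "open W" "z \<in> W" and sym: "\<forall>y\<in>W. transpose (f y) = f y" and d: "lineD f z c v"
  shows "transpose v = v"
proof -
  have "lineD (\<lambda>y. transpose (f y)) z c (transpose v)"
    using d unfolding lineD_def by (rule bounded_linear.has_vector_derivative[OF bounded_linear_transpose])
  from lineD_unique_eq[OF W _ this d] sym show ?thesis by auto
qed

section \<open>Differentiability at 0 of functions of one real variable\<close>

definition DL :: "(real \<Rightarrow> 'b::real_normed_vector) \<Rightarrow> bool" where
  "DL \<phi> \<longleftrightarrow> \<phi> differentiable (at 0)"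

lemma lineD_DL: "lineD f z c v \<Longrightarrow> DL (\<lambda>t. f (z + t *\<^sub>R axis c 1))"
  unfolding lineD_def DL_def differentiable_def has_vector_derivative_def by blast

lemma DL_lineD: "DL (\<lambda>t. f (z + t *\<^sub>R axis c 1)) \<Longrightarrow> \<exists>v. lineD f z c v"
  unfolding lineD_def DL_def using vector_derivative_works by blast

lemma DL_nth: "DL \<phi> \<Longrightarrow> DL (\<lambda>t. \<phi> t $ i)"
  unfolding DL_def differentiable_def
  using bounded_linear.has_derivative[OF bounded_linear_vec_nth] by blast

lemma DL_vec:
  fixes \<phi> :: "real \<Rightarrow> real^'n::finite"
  assumes "\<And>i. DL (\<lambda>t. \<phi> t $ i)"
  shows "DL \<phi>"
proof -
  have "(\<lambda>x. \<phi> x \<bullet> b) differentiable at 0" if b: "b \<in> Basis" for b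
  proof -
    obtain i where "b = axis i 1" using b by (auto simp: Basis_vec_def)
    then have "(\<lambda>x. \<phi> x \<bullet> b) = (\<lambda>x. \<phi> x $ i)" by (simp add: cart_eq_inner_axis)
    then show ?thesis using assms[of i] unfolding DL_def by simp
  qed
  then show ?thesis unfolding DL_def using differentiable_componentwise_within[of \<phi>] by blast
qed

lemma DL_const: "DL (\<lambda>t. c)" unfolding DL_def by simp
lemma DL_add: "DL f \<Longrightarrow> DL g \<Longrightarrow> DL (\<lambda>t. f t + g t)" unfolding DL_def by simp
lemma DL_diff: "DL f \<Longrightarrow> DL g \<Longrightarrow> DL (\<lambda>t. f t - g t)" unfolding DL_def by simp
lemma DL_minus: "DL f \<Longrightarrow> DL (\<lambda>t. - f t)" unfolding DL_def by simp
lemma DL_mult: "DL (f::real\<Rightarrow>real) \<Longrightarrow> DL g \<Longrightarrow> DL (\<lambda>t. f t * g t)" unfolding DL_def by simp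
lemma DL_divide: "DL (f::real\<Rightarrow>real) \<Longrightarrow> DL g \<Longrightarrow> g 0 \<noteq> 0 \<Longrightarrow> DL (\<lambda>t. f t / g t)"
  unfolding DL_def by simp
lemma DL_scaleR: "DL (f::real\<Rightarrow>real) \<Longrightarrow> DL g \<Longrightarrow> DL (\<lambda>t. f t *\<^sub>R g t)"
  unfolding DL_def differentiable_def
  using has_derivative_scaleR by blast
lemma DL_sum: "finite S \<Longrightarrow> (\<And>a. a \<in> S \<Longrightarrow> DL (f a)) \<Longrightarrow> DL (\<lambda>t. \<Sum>a\<in>S. f a t)"
  unfolding DL_def by (rule differentiable_sum) auto
lemma DL_prod: "finite S \<Longrightarrow> (\<And>a. a \<in> S \<Longrightarrow> DL (f a :: real \<Rightarrow> real)) \<Longrightarrow> DL (\<lambda>t. \<Prod>a\<in>S. f a t)"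
  by (induction S rule: finite_induct) (auto intro: DL_mult DL_const)
lemma DL_sqrt: "DL f \<Longrightarrow> f 0 > 0 \<Longrightarrow> DL (\<lambda>t. sqrt (f t))"
proof -
  assume f: "DL f" and p: "f 0 > 0"
  have "sqrt differentiable (at (f 0))"
    using DERIV_real_sqrt[OF p] real_differentiable_def
    by (metis differentiableI has_field_derivative_imp_has_derivative)
  then show ?thesis using f unfolding DL_def by (rule differentiable_compose)
qed
lemma DL_norm: "DL (f :: real \<Rightarrow> real^'n::finite) \<Longrightarrow> f 0 \<noteq> 0 \<Longrightarrow> DL (\<lambda>t. norm (f t))"
  unfolding DL_def by (rule differentiable_compose[OF differentiable_norm_at])
lemma DL_inner: "DL (f :: real \<Rightarrow> real^'n::finite) \<Longrightarrow> DL g \<Longrightarrow> DL (\<lambda>t. f t \<bullet> g t)"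
  unfolding DL_def by simp

lemma DL_mat_det:
  fixes M :: "real \<Rightarrow> real^'n::finite^'n"
  assumes "\<And>i j. DL (\<lambda>t. M t $ i $ j)"
  shows "DL (\<lambda>t. det (M t))"
  unfolding det_def
  apply (rule DL_sum)
   apply (simp add: finite_permutations)
  apply (rule DL_mult[OF DL_const])
  apply (rule DL_prod)
   apply simp
  apply (rule assms)
  done

lemma DL_mv:
  fixes M :: "real \<Rightarrow> real^'n::finite^'m::finite"
  assumes "\<And>i j. DL (\<lambda>t. M t $ i $ j)" "\<And>i. DL (\<lambda>t. v t $ i)"
  shows "DL (\<lambda>t. (M t *v v t) $ k)"
  unfolding matrix_vector_mult_def by (simp, intro DL_sum DL_mult assms) auto

lemma matrix_inv_works:
  fixes A :: "real^'n::finite^'n"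
  assumes "det A \<noteq> 0"
  shows "A ** matrix_inv A = mat 1" "matrix_inv A ** A = mat 1"
proof -
  have "invertible A" using assms invertible_det_nz by blast
  then have "\<exists>A'. A ** A' = mat 1 \<and> A' ** A = mat 1" unfolding invertible_def .
  then have "A ** matrix_inv A = mat 1 \<and> matrix_inv A ** A = mat 1"
    unfolding matrix_inv_def by (rule someI_ex)
  then show "A ** matrix_inv A = mat 1" "matrix_inv A ** A = mat 1" by auto
qed

lemma matrix_inv_mv:
  fixes A :: "real^'n::finite^'n"
  assumes "det A \<noteq> 0"
  shows "A *v (matrix_inv A *v v) = v"
  using matrix_inv_works[OF assms] by (simp add: matrix_vector_mul_assoc)

lemma matrix_inv_mv_eq:
  fixes A :: "real^'n::finite^'n"
  assumes "det A \<noteq> 0" "A *v u = v"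
  shows "matrix_inv A *v v = u"
  using matrix_inv_works[OF assms(1)] assms(2)
  by (metis matrix_vector_mul_assoc matrix_vector_mul_lid)

lemma cramer_inv:
  fixes A :: "real^'n::finite^'n"
  assumes "det A \<noteq> 0"
  shows "matrix_inv A *v v = (\<chi> k. det (\<chi> i j. if j = k then v $ i else A $ i $ j) / det A)"
  using cramer[OF assms, of "matrix_inv A *v v" v] matrix_inv_mv[OF assms] by simp

lemma DL_invmv:
  fixes M :: "real \<Rightarrow> real^'n::finite^'n"
  assumes M: "\<And>i j. DL (\<lambda>t. M t $ i $ j)" and d: "det (M 0) \<noteq> 0" and v: "\<And>i. DL (\<lambda>t. v t $ i)"
  shows "DL (\<lambda>t. (matrix_inv (M t) *v v t) $ k)"
proof -
  have dd: "DL (\<lambda>t. det (M t))" by (rule DL_mat_det[OF M])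
  then have "isCont (\<lambda>t. det (M t)) 0" unfolding DL_def by (rule differentiable_imp_continuous_within)
  from continuous_at_avoid[OF this d] obtain e where e: "e > 0" "\<forall>y. dist 0 y < e \<longrightarrow> det (M y) \<noteq> 0" by blast
  have "DL (\<lambda>t. det (\<chi> i j. if j = k then v t $ i else M t $ i $ j) / det (M t))"
    apply (intro DL_divide dd d DL_mat_det)
    subgoal for i j by (cases "j = k") (simp_all add: M v)
    done
  then show ?thesis unfolding DL_def
    apply (rule differentiable_transform_within[OF _ e(1)])
    using e(2) by (auto simp: cramer_inv dist_commute)
qed

lemma inv2_real:
  fixes a b c e w1 w2 D :: real
  assumes "D = a*e - b*c" "D \<noteq> 0"
  shows "a * ((e * w1 - b * w2) / D) + b * ((a * w2 - c * w1) / D) = w1"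
    "c * ((e * w1 - b * w2) / D) + e * ((a * w2 - c * w1) / D) = w2"
  using assms(2) by (simp_all add: field_simps) (simp_all add: assms(1) algebra_simps)

lemma inv2_mv:
  fixes A :: "real^2^2"
  assumes d: "det A \<noteq> 0"
  shows "matrix_inv A *v w = vector [(A$2$2 * w$1 - A$1$2 * w$2) / det A, (A$1$1 * w$2 - A$2$1 * w$1) / det A]"
proof (rule matrix_inv_mv_eq[OF d])
  show "A *v vector [(A$2$2 * w$1 - A$1$2 * w$2) / det A, (A$1$1 * w$2 - A$2$1 * w$1) / det A] = w"
    unfolding vec_eq_iff forall_2 matrix_vector_mult_def sum_2
    using inv2_real[OF det_2 d, of "w$1" "w$2"] by simp
qed

lemma inner3: "(x::real^3) \<bullet> y = x$1*y$1 + x$2*y$2 + x$3*y$3"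
  by (simp add: inner_vec_def sum_3)

lemma sym3: "transpose (g::real^3^3) = g \<Longrightarrow> g$2$1 = g$1$2 \<and> g$3$1 = g$1$3 \<and> g$3$2 = g$2$3"
proof -
  assume h: "transpose g = g"
  have e: "g$i$j = g$j$i" for i j
  proof -
    have "g$i$j = transpose g $j$i" by (simp add: transpose_def)
    then show ?thesis by (simp add: h)
  qed
  show ?thesis using e by metis
qed

lemma sym_entry: "transpose (g::real^'n::finite^'n) = g \<Longrightarrow> g$i$j = g$j$i"
proof -
  assume h: "transpose g = g"
  have "g$i$j = transpose g $j$i" by (simp add: transpose_def)
  then show ?thesis by (simp add: h)
qed

lemma quad3s:
  assumes "transpose (g::real^3^3) = g"
  shows "(v::real^3) \<bullet> (g *v v) = 
   g$1$1 * v$1 * v$1 + g$2$2 * v$2 * v$2 + g$3$3 * v$3 * v$3 + 2 * g$1$2 * v$1 * v$2 + 2 * g$1$3 * v$1 * v$3 + 2 * g$2$3 * v$2 * v$3"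
proof -
  have "(v::real^3) \<bullet> (g *v v) = v$1 * (g$1$1 * v$1 + g$1$2 * v$2 + g$1$3 * v$3) + v$2 * (g$2$1 * v$1 + g$2$2 * v$2 + g$2$3 * v$3) + v$3 * (g$3$1 * v$1 + g$3$2 * v$2 + g$3$3 * v$3)"
    by (simp add: inner3 matrix_vector_mult_def sum_3)
  then show ?thesis using sym3[OF assms] by (simp add: algebra_simps)
qed

lemma det3s:
  assumes "transpose (g::real^3^3) = g"
  shows "det g = g$1$1*g$2$2*g$3$3 + 2*g$1$2*g$2$3*g$1$3 - g$1$1*g$2$3*g$2$3 - g$1$2*g$1$2*g$3$3 - g$1$3*g$2$2*g$1$3"
  using sym3[OF assms] unfolding det_3 by (simp add: algebra_simps)

lemma blk2_entries: "blk2 g $ 1 $ 1 = g$1$1" "blk2 g $ 1 $ 2 = g$1$2" "blk2 g $ 2 $ 1 = g$2$1" "blk2 g $ 2 $ 2 = g$2$2"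
  by (simp_all add: blk2_def idx_def)

lemma det2s:
  assumes "transpose (g::real^3^3) = g"
  shows "det (blk2 g) = g$1$1*g$2$2 - g$1$2*g$1$2"
  using sym3[OF assms] unfolding det_2 blk2_entries by simp

lemma schur_real:
  fixes a11 a12 a13 a22 a23 a33 d :: real
  assumes "d = a11*a22 - a12*a12" "d \<noteq> 0"
  shows "(a11*a22*a33 + 2*a12*a23*a13 - a11*a23*a23 - a12*a12*a33 - a13*a22*a13)/d = a33 - ((a22*a13 - a12*a23)/d*a13 + (a11*a23 - a12*a13)/d*a23)"
  using assms(2) by (simp add: field_simps) (simp add: assms(1) algebra_simps)

lemma quad_real1:
  fixes a11 a12 a13 a22 a23 a33 :: real
  shows "a11 * a12 * a12 + a22 * (- a11) * (- a11) + a33 * 0 * 0 + 2 * a12 * a12 * (- a11) + 2 * a13 * a12 * 0 + 2 * a23 * (- a11) * 0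
     = a11 * (a11*a22 - a12*a12)"
  by (simp add: algebra_simps)

lemma quad_real2:
  fixes a11 a12 a13 a22 a23 a33 d u1 u2 :: real
  assumes "d = a11*a22 - a12*a12" "d \<noteq> 0" "u1 = (a22*a13 - a12*a23)/d" "u2 = (a11*a23 - a12*a13)/d"
  shows "a11 * (-u1) * (-u1) + a22 * (-u2) * (-u2) + a33 * 1 * 1 + 2 * a12 * (-u1) * (-u2) + 2 * a13 * (-u1) * 1 + 2 * a23 * (-u2) * 1
     = a33 - (u1*a13 + u2*a23)"
  using assms(2) unfolding assms(3,4) by (simp add: field_simps) (simp add: assms(1) algebra_simps)

lemma pd_facts:
  fixes g :: "real^3^3"
  assumes sym: "transpose g = g" and pd: "\<forall>v. v \<noteq> 0 \<longrightarrow> v \<bullet> (g *v v) > 0"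
  shows "det (blk2 g) > 0" "det g > 0"
    "det g / det (blk2 g) = g$3$3 - ((g$2$2 * g$1$3 - g$1$2 * g$2$3) / det (blk2 g) * g$1$3 + (g$1$1 * g$2$3 - g$1$2 * g$1$3) / det (blk2 g) * g$2$3)"
proof -
  have "axis 1 (1::real) \<noteq> (0::real^3)" by simp
  then have "axis 1 1 \<bullet> (g *v axis 1 1) > 0" using pd by blast
  then have g11: "g$1$1 > 0" unfolding quad3s[OF sym] by (simp add: axis_def)
  show d2: "det (blk2 g) > 0"
  proof -
    let ?v = "vector [g$1$2, - g$1$1, 0] :: real^3"
    have "?v \<noteq> 0" using g11 by (auto simp: vec_eq_iff forall_3)
    then have "?v \<bullet> (g *v ?v) > 0" using pd by blast
    also have "?v \<bullet> (g *v ?v) = g$1$1 * det (blk2 g)"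
      unfolding quad3s[OF sym] det2s[OF sym] by (simp only: vector_3 quad_real1)
    finally show ?thesis using g11 by (simp add: zero_less_mult_iff)
  qed
  let ?d = "det (blk2 g)"
  let ?u1 = "(g$2$2 * g$1$3 - g$1$2 * g$2$3) / ?d" and ?u2 = "(g$1$1 * g$2$3 - g$1$2 * g$1$3) / ?d"
  have schur: "det g / ?d = g$3$3 - (?u1 * g$1$3 + ?u2 * g$2$3)"
    unfolding det3s[OF sym] by (rule schur_real[OF det2s[OF sym]]) (use d2 in simp)
  then show "det g / det (blk2 g) = g$3$3 - ((g$2$2 * g$1$3 - g$1$2 * g$2$3) / det (blk2 g) * g$1$3 + (g$1$1 * g$2$3 - g$1$2 * g$1$3) / det (blk2 g) * g$2$3)" .
  let ?v = "vector [- ?u1, - ?u2, 1] :: real^3"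
  have "?v \<noteq> 0" by (auto simp: vec_eq_iff forall_3)
  then have "?v \<bullet> (g *v ?v) > 0" using pd by blast
  also have "?v \<bullet> (g *v ?v) = g$3$3 - (?u1 * g$1$3 + ?u2 * g$2$3)"
    unfolding quad3s[OF sym] vector_3 by (rule quad_real2[OF det2s[OF sym]]) (use d2 in simp_all)
  finally have pos: "0 < g$3$3 - (?u1 * g$1$3 + ?u2 * g$2$3)" .
  have "0 < det g / ?d" unfolding schur by (rule pos)
  then show "det g > 0" using d2 by (simp add: zero_less_divide_iff)
qed

lemma column_Q0:
  "column m (Q0 G y0 x') = (if m = 1 then partial 1 y0 x' else if m = 2 then partial 2 y0 x' else b0 G y0 x')"
  by (simp add: column_def Q0_def vec_eq_iff)

lemma tmm_entry: "(transpose A ** A) $ m $ l = column m A \<bullet> column l (A::real^'n::finite^'k::finite)"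
  by (simp add: matrix_matrix_mult_def transpose_def column_def inner_vec_def mult.commute)

lemma grad2_mv: "grad2 f x *v u = u$1 *\<^sub>R partial 1 f x + u$2 *\<^sub>R partial 2 f x"
  by (simp add: grad2_def matrix_vector_mult_def sum_2 vec_eq_iff mult.commute)

lemma grad2_col: "column c (grad2 f x) = partial c f x"
  by (simp add: grad2_def column_def vec_eq_iff)

lemma hypY:
  assumes "transpose (grad2 y0 x') ** grad2 y0 x' = blk2 (Gbar G x')"
  shows "partial a y0 x' \<bullet> partial b y0 x' = G (emb x') $ idx a $ idx b"
proof -
  have "(transpose (grad2 y0 x') ** grad2 y0 x') $ a $ b = blk2 (Gbar G x') $ a $ b" using assms by simp
  then show ?thesis by (simp add: tmm_entry grad2_col blk2_def Gbar_def)
qed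

lemma idx_simps: "idx 1 = 1" "idx 2 = 2"
  by (simp_all add: idx_def)

lemma b0_real1:
  fixes g11 g12 g13 g22 g23 D u1 u2 :: real
  assumes "D = g11*g22 - g12*g12" "D \<noteq> 0" "u1 = (g22 * g13 - g12 * g23) / D" "u2 = (g11 * g23 - g12 * g13) / D"
  shows "u1 * g11 + u2 * g12 = g13" "u1 * g12 + u2 * g22 = g23"
  using assms(2) unfolding assms(3,4) by (simp_all add: field_simps) (simp_all add: assms(1) algebra_simps)

lemma b0_point:
  assumes sym: "transpose (G (emb x')) = G (emb x')" and pd: "\<forall>v. v \<noteq> 0 \<longrightarrow> v \<bullet> (G (emb x') *v v) > 0"
    and hyp: "transpose (grad2 y0 x') ** grad2 y0 x' = blk2 (Gbar G x')"
  shows "partial 1 y0 x' \<bullet> b0 G y0 x' = G (emb x') $ 1 $ 3"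
    "partial 2 y0 x' \<bullet> b0 G y0 x' = G (emb x') $ 2 $ 3"
    "b0 G y0 x' \<bullet> b0 G y0 x' = G (emb x') $ 3 $ 3"
    "cross3 (partial 1 y0 x') (partial 2 y0 x') \<noteq> 0"
proof -
  define g where "g = G (emb x')"
  define Y1 where "Y1 = partial 1 y0 x'"
  define Y2 where "Y2 = partial 2 y0 x'"
  note s = sym3[OF sym[folded g_def]]
  have Y11: "Y1 \<bullet> Y1 = g$1$1" and Y12: "Y1 \<bullet> Y2 = g$1$2" and Y22: "Y2 \<bullet> Y2 = g$2$2"
    using hypY[OF hyp, of 1 1] hypY[OF hyp, of 1 2] hypY[OF hyp, of 2 2]
    by (simp_all add: Y1_def Y2_def g_def idx_simps)
  have Y21: "Y2 \<bullet> Y1 = g$1$2" using Y12 by (simp add: inner_commute)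
  define d where "d = det (blk2 g)"
  have d2: "d = g$1$1*g$2$2 - g$1$2*g$1$2" unfolding d_def by (rule det2s[OF sym[folded g_def]])
  have dpos: "d > 0" "det g > 0" and sch: "det g / d = g$3$3 - ((g$2$2 * g$1$3 - g$1$2 * g$2$3) / d * g$1$3 + (g$1$1 * g$2$3 - g$1$2 * g$1$3) / d * g$2$3)"
    using pd_facts[OF sym pd] unfolding d_def g_def by auto
  define u1 where "u1 = (g$2$2 * g$1$3 - g$1$2 * g$2$3) / d"
  define u2 where "u2 = (g$1$1 * g$2$3 - g$1$2 * g$1$3) / d"
  have uu: "u1 * g$1$1 + u2 * g$1$2 = g$1$3" "u1 * g$1$2 + u2 * g$2$2 = g$2$3"
    using b0_real1[OF d2 _ u1_def u2_def] dpos by auto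
  have inv: "matrix_inv (blk2 g) *v vector [g$1$3, g$2$3] = vector [u1, u2]"
    unfolding inv2_mv[OF dpos(1)[unfolded d_def, THEN less_imp_neq, symmetric]]
    by (simp add: blk2_entries u1_def u2_def d_def s)
  define cr where "cr = cross3 Y1 Y2"
  have a: "(norm cr)^2 + (Y1 \<bullet> Y2)^2 = (norm Y1 * norm Y2)^2" using norm_cross_dot[of Y1 Y2] unfolding cr_def .
  have b: "(norm Y1 * norm Y2)^2 = (Y1 \<bullet> Y1) * (Y2 \<bullet> Y2)" by (simp add: power_mult_distrib power2_norm_eq_inner)
  have ncr: "(norm cr)^2 = d" using a b unfolding Y11 Y12 Y22 d2 power2_eq_square by linarith
  have cr0: "cr \<noteq> 0" using ncr dpos by auto
  define n where "n = cr /\<^sub>R norm cr"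
  have n1: "n \<bullet> n = 1" using cr0 by (simp add: n_def inner_commute) (simp add: power2_norm_eq_inner[symmetric] power2_eq_square field_simps)
  have Yn: "Y1 \<bullet> n = 0" "Y2 \<bullet> n = 0" by (simp_all add: n_def cr_def dot_cross_self)
  define sq where "sq = sqrt (det g / d)"
  have sq2: "sq * sq = det g / d" using dpos by (simp add: sq_def)
  have b0eq: "b0 G y0 x' = u1 *\<^sub>R Y1 + u2 *\<^sub>R Y2 + sq *\<^sub>R n"
    unfolding b0_def grad2_mv Gbar_def g_def[symmetric] inv
    by (simp add: Y1_def Y2_def sq_def d_def n_def cr_def)
  show "partial 1 y0 x' \<bullet> b0 G y0 x' = G (emb x') $ 1 $ 3"
    unfolding b0eq Y1_def[symmetric] g_def[symmetric] inner_add_right inner_scaleR_right Y11 Y12 Yn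
    using uu(1) by (simp add: mult.commute)
  show "partial 2 y0 x' \<bullet> b0 G y0 x' = G (emb x') $ 2 $ 3"
    unfolding b0eq Y2_def[symmetric] g_def[symmetric] inner_add_right inner_scaleR_right Y22 Y21 Yn
    using uu(2) by (simp add: mult.commute)
  define w where "w = u1 *\<^sub>R Y1 + u2 *\<^sub>R Y2"
  have ww: "w \<bullet> w = u1 * (u1 * g$1$1 + u2 * g$1$2) + u2 * (u1 * g$1$2 + u2 * g$2$2)"
    unfolding w_def inner_add_left inner_add_right inner_scaleR_left inner_scaleR_right Y11 Y12 Y22 Y21
    by (simp add: algebra_simps)
  have wn: "w \<bullet> n = 0" "n \<bullet> w = 0" unfolding w_def inner_add_left inner_add_right inner_scaleR_left inner_scaleR_right
    using Yn by (simp_all add: inner_commute[of n])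
  have "b0 G y0 x' \<bullet> b0 G y0 x' = w \<bullet> w + sq * sq * (n \<bullet> n) + sq * (w \<bullet> n) + sq * (n \<bullet> w)"
    unfolding b0eq w_def[symmetric] inner_add_left inner_add_right inner_scaleR_left inner_scaleR_right
    by (simp add: algebra_simps)
  also have "\<dots> = u1 * (u1 * g$1$1 + u2 * g$1$2) + u2 * (u1 * g$1$2 + u2 * g$2$2) + sq * sq"
    unfolding ww wn n1 by simp
  also have "\<dots> = g$3$3" unfolding uu sq2 sch u1_def[symmetric] u2_def[symmetric] by simp
  finally show "b0 G y0 x' \<bullet> b0 G y0 x' = G (emb x') $ 3 $ 3" by (simp add: g_def)
  show "cross3 (partial 1 y0 x') (partial 2 y0 x') \<noteq> 0" using cr0 by (simp add: cr_def Y1_def Y2_def)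
qed

lemma tmv_entry: "(transpose A *v x) $ m = column m A \<bullet> (x::real^'k::finite)"
  for A :: "real^'n::finite^'k"
  by (simp add: matrix_vector_mult_def transpose_def column_def inner_vec_def mult.commute)

lemma mv_col: "(A *v x) = (\<Sum>m\<in>UNIV. x $ m *\<^sub>R column m A)" for A :: "real^'n::finite^'k::finite"
  by (simp add: matrix_vector_mult_def column_def vec_eq_iff mult.commute)

lemma quad_QtQ: "u \<bullet> ((transpose Q ** Q) *v w) = (Q *v u) \<bullet> (Q *v (w::real^'n::finite))"
  for Q :: "real^'n^'k::finite"
proof -
  have "(transpose Q ** Q) *v w = transpose Q *v (Q *v w)" by (simp add: matrix_vector_mul_assoc)
  moreover have "u \<bullet> (transpose Q *v y) = (Q *v u) \<bullet> y" for y
    using dot_lmul_matrix[of u "transpose Q" y] by simp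
  ultimately show ?thesis by metis
qed

lemma mv_nth: "(A *v x) $ i = (\<Sum>j\<in>UNIV. A$i$j * x$j)"
  by (simp add: matrix_vector_mult_def)

lemma sumsum_quad: "(\<Sum>n\<in>UNIV. \<Sum>p\<in>UNIV. g $ n $ p * (u $ n * w $ p)) = u \<bullet> (g *v (w::real^'n::finite))"
  by (simp add: inner_vec_def matrix_vector_mult_def sum_distrib_left mult.assoc mult.left_commute)

lemma riem_christoffel:
  fixes G :: "real^3 \<Rightarrow> real^3^3" and Q :: "real^3^3" and V :: "3 \<Rightarrow> 3 \<Rightarrow> real^3"
  assumes GQ: "G E = transpose Q ** Q" and dQ: "det Q \<noteq> 0"
    and Vsym: "\<And>k l. V k l = V l k"
    and P: "\<And>k m l. partial k G E $ m $ l = V k m \<bullet> column l Q + column m Q \<bullet> V k l"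
  shows "Christoffel G i k l E = (matrix_inv Q *v V k l) $ i"
proof -
  have low: "(1/2) * (partial l G E $ m $ k + partial k G E $ m $ l - partial m G E $ k $ l) = column m Q \<bullet> V k l" for m
    unfolding P using Vsym[of l m] Vsym[of l k] Vsym[of k m]
    by (simp add: inner_commute algebra_simps)
  have dg: "det (transpose Q ** Q) \<noteq> 0" using dQ by (simp add: det_mul det_transpose)
  have "(transpose Q ** Q) *v (matrix_inv Q *v V k l) = transpose Q *v V k l"
    by (simp add: matrix_vector_mul_assoc[symmetric] matrix_inv_mv[OF dQ])
  then have inv: "matrix_inv (G E) *v (transpose Q *v V k l) = matrix_inv Q *v V k l"
    unfolding GQ by (rule matrix_inv_mv_eq[OF dg])
  have "Christoffel G i k l E = (\<Sum>m\<in>UNIV. matrix_inv (G E) $ i $ m * ((1/2) * (partial l G E $ m $ k + partial k G E $ m $ l - partial m G E $ k $ l)))"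
    unfolding Christoffel_def by (simp add: sum_distrib_left algebra_simps)
  also have "\<dots> = (matrix_inv (G E) *v (transpose Q *v V k l)) $ i"
    unfolding low mv_nth[of "matrix_inv (G E)" "transpose Q *v V k l" i] tmv_entry ..
  finally show ?thesis unfolding inv .
qed

lemma riem_quad:
  fixes G :: "real^3 \<Rightarrow> real^3^3" and Q :: "real^3^3" and V :: "3 \<Rightarrow> 3 \<Rightarrow> real^3"
  assumes GQ: "G E = transpose Q ** Q" and dQ: "det Q \<noteq> 0"
    and Vsym: "\<And>k l. V k l = V l k"
    and P: "\<And>k m l. partial k G E $ m $ l = V k m \<bullet> column l Q + column m Q \<bullet> V k l"
  shows "(\<Sum>n\<in>UNIV. \<Sum>p\<in>UNIV. G E $ n $ p *
          (Christoffel G n k l E * Christoffel G p i m E - Christoffel G n k m E * Christoffel G p i l E))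
         = V k l \<bullet> V i m - V k m \<bullet> V i l"
proof -
  note C = riem_christoffel[OF GQ dQ Vsym P]
  have e: "(\<Sum>n\<in>UNIV. \<Sum>p\<in>UNIV. G E $ n $ p * ((matrix_inv Q *v a) $ n * (matrix_inv Q *v b) $ p)) = a \<bullet> b" for a b
    unfolding sumsum_quad GQ quad_QtQ by (simp add: matrix_inv_mv[OF dQ])
  have "(\<Sum>n\<in>UNIV. \<Sum>p\<in>UNIV. G E $ n $ p *
          (Christoffel G n k l E * Christoffel G p i m E - Christoffel G n k m E * Christoffel G p i l E))
     = (\<Sum>n\<in>UNIV. \<Sum>p\<in>UNIV. G E $ n $ p * ((matrix_inv Q *v V k l) $ n * (matrix_inv Q *v V i m) $ p))
      - (\<Sum>n\<in>UNIV. \<Sum>p\<in>UNIV. G E $ n $ p * ((matrix_inv Q *v V k m) $ n * (matrix_inv Q *v V i l) $ p))"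
    unfolding C by (simp add: right_diff_distrib sum_subtractf)
  then show ?thesis unfolding e .
qed

lemma DL_inverse: "DL (f::real\<Rightarrow>real) \<Longrightarrow> f 0 \<noteq> 0 \<Longrightarrow> DL (\<lambda>t. inverse (f t))"
  unfolding DL_def by simp

lemma DL_vector2: "DL f1 \<Longrightarrow> DL f2 \<Longrightarrow> DL (\<lambda>t. (vector [f1 t, f2 t] :: real^2) $ i)"
  using exhaust_2[of i] by auto

lemma DL_vector3: "DL f1 \<Longrightarrow> DL f2 \<Longrightarrow> DL f3 \<Longrightarrow> DL (\<lambda>t. (vector [f1 t, f2 t, f3 t] :: real^3) $ i)"
  using exhaust_3[of i] by auto

lemma DL_cross:
  assumes "\<And>i. DL (\<lambda>t. a t $ i)" "\<And>i. DL (\<lambda>t. b t $ i)"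
  shows "DL (\<lambda>t. cross3 (a t) (b t) $ k)"
  unfolding cross3_def by (intro DL_vector3 DL_diff DL_mult assms)

lemma proj_emb: "proj (emb z) = z"
  by (simp add: proj_def emb_def vec_eq_iff forall_2)

lemma emb3: "emb z $ 3 = 0"
  by (simp add: emb_def)

lemma bounded_linear_proj: "bounded_linear proj"
  unfolding linear_conv_bounded_linear[symmetric]
  by (rule linearI) (simp_all add: proj_def vec_eq_iff forall_2)

lemma open_cyl: "open \<omega> \<Longrightarrow> open (cyl \<omega>)"
proof -
  assume o: "open \<omega>"
  have "cyl \<omega> = proj -` \<omega> \<inter> {x. -1/2 < x$3} \<inter> {x. x$3 < 1/2}"
    by (auto simp: cyl_def)
  moreover have "open (proj -` \<omega>)"
    by (rule continuous_open_vimage[OF o]) (simp add: linear_continuous_at bounded_linear_proj)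
  moreover have "open {x::real^3. -1/2 < x$3}" "open {x::real^3. x$3 < 1/2}"
    by (intro open_Collect_less continuous_intros)+
  ultimately show ?thesis by auto
qed

lemma emb_cyl: "z \<in> \<omega> \<Longrightarrow> emb z \<in> cyl \<omega>"
  by (simp add: cyl_def proj_emb emb3)

locale setting =
  fixes \<omega> :: "(real^2) set" and G :: "real^3 \<Rightarrow> real^3^3" and y0 :: "real^2 \<Rightarrow> real^3"
    and UG :: "(real^3) set" and Vy :: "(real^2) set"
  assumes om: "open \<omega>" and UG: "open UG" "cyl \<omega> \<subseteq> UG" "smooth_on UG G"
    and Vy: "open Vy" "\<omega> \<subseteq> Vy" "smooth_on Vy y0"
    and spd: "\<forall>x\<in>cyl \<omega>. sym_pos_def (G x)"
    and h1: "\<forall>x'\<in>\<omega>. transpose (grad2 y0 x') ** grad2 y0 x' = blk2 (Gbar G x')"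
    and h2: "\<forall>x'\<in>\<omega>. msym (transpose (grad2 y0 x') ** grad2 (b0 G y0) x') = (1/2) *\<^sub>R blk2 (partial 3 G (emb x'))"


lemma (in setting) symG: "y \<in> cyl \<omega> \<Longrightarrow> transpose (G y) = G y"
  using spd by (simp add: sym_pos_def_def)

lemma (in setting) pdG: "y \<in> cyl \<omega> \<Longrightarrow> \<forall>v. v \<noteq> 0 \<longrightarrow> v \<bullet> (G y *v v) > 0"
  using spd by (simp add: sym_pos_def_def)

lemma (in setting) symP: "y \<in> cyl \<omega> \<Longrightarrow> transpose (partial k G y) = partial k G y"
  by (rule lineD_transpose_sym[OF open_cyl[OF om] _ _ smooth_lineD0[OF UG(3)]]) (use symG UG(2) in auto)

lemma (in setting) symPP: "y \<in> cyl \<omega> \<Longrightarrow> transpose (partial i (partial k G) y) = partial i (partial k G) y"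
  by (rule lineD_transpose_sym[OF open_cyl[OF om] _ _ smooth_lineD1[OF UG(3)]]) (use symP UG(2) in auto)

lemma (in setting) lineG: "z \<in> \<omega> \<Longrightarrow> lineD (\<lambda>z. G (emb z)) z c (partial (idx c) G (emb z))"
  by (rule lineD_emb, rule smooth_lineD0[OF UG(3)]) (use UG(2) emb_cyl in auto)

lemma (in setting) linePG: "z \<in> \<omega> \<Longrightarrow> lineD (\<lambda>z. partial k G (emb z)) z c (partial (idx c) (partial k G) (emb z))"
  by (rule lineD_emb, rule smooth_lineD1[OF UG(3)]) (use UG(2) emb_cyl in auto)

lemma (in setting) lineY: "z \<in> \<omega> \<Longrightarrow> lineD (partial a y0) z c (partial c (partial a y0) z)"
  by (rule smooth_lineD1[OF Vy(3)]) (use Vy(2) in auto)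

lemma (in setting) lineYY: "z \<in> \<omega> \<Longrightarrow> lineD (partial b (partial a y0)) z c (partial c (partial b (partial a y0)) z)"
  using smooth_lineD[OF Vy(3), of z "[b,a]" c] Vy(2) by auto

lemma (in setting) DLG: "z \<in> \<omega> \<Longrightarrow> DL (\<lambda>t. G (emb (z + t *\<^sub>R axis c 1)) $ i $ j)"
  by (intro DL_nth lineD_DL[where f="\<lambda>z. G (emb z)", OF lineG])

lemma (in setting) DLPG: "z \<in> \<omega> \<Longrightarrow> DL (\<lambda>t. partial k G (emb (z + t *\<^sub>R axis c 1)) $ i $ j)"
  by (intro DL_nth lineD_DL[where f="\<lambda>z. partial k G (emb z)", OF linePG])

lemma (in setting) DLY: "z \<in> \<omega> \<Longrightarrow> DL (\<lambda>t. partial a y0 (z + t *\<^sub>R axis c 1) $ i)"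
  by (intro DL_nth lineD_DL[OF lineY])

lemma (in setting) DLYY: "z \<in> \<omega> \<Longrightarrow> DL (\<lambda>t. partial b (partial a y0) (z + t *\<^sub>R axis c 1) $ i)"
  by (intro DL_nth lineD_DL[OF lineYY])

lemma (in setting) b0pt: "z \<in> \<omega> \<Longrightarrow>
    partial 1 y0 z \<bullet> b0 G y0 z = G (emb z) $ 1 $ 3 \<and>
    partial 2 y0 z \<bullet> b0 G y0 z = G (emb z) $ 2 $ 3 \<and>
    b0 G y0 z \<bullet> b0 G y0 z = G (emb z) $ 3 $ 3 \<and>
    cross3 (partial 1 y0 z) (partial 2 y0 z) \<noteq> 0"
proof -
  assume z: "z \<in> \<omega>"
  then have e: "emb z \<in> cyl \<omega>" by (rule emb_cyl)
  show ?thesis using b0_point[OF symG[OF e] pdG[OF e] h1[rule_format, OF z]] by auto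
qed

lemma (in setting) detpos: "z \<in> \<omega> \<Longrightarrow> det (blk2 (G (emb z))) > 0 \<and> det (G (emb z)) > 0"
  using pd_facts[OF symG pdG] emb_cyl by auto

lemma (in setting) DLb0: assumes z: "z \<in> \<omega>" shows "DL (\<lambda>t. b0 G y0 (z + t *\<^sub>R axis c 1) $ k)"
proof -
  let ?p = "\<lambda>t. z + t *\<^sub>R axis c 1"
  have p0: "?p 0 = z" by simp
  have g: "DL (\<lambda>t. G (emb (?p t)) $ i $ j)" for i j using DLG[OF z] .
  have b2: "DL (\<lambda>t. blk2 (G (emb (?p t))) $ i $ j)" for i j unfolding blk2_def using g by simp
  have y: "DL (\<lambda>t. grad2 y0 (?p t) $ r $ a)" for r a unfolding grad2_def using DLY[OF z] by simp
  have u: "DL (\<lambda>t. (matrix_inv (blk2 (G (emb (?p t)))) *v vector [G (emb (?p t)) $ 1 $ 3, G (emb (?p t)) $ 2 $ 3]) $ i)" for i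
    by (rule DL_invmv[OF b2]) (use detpos[OF z] in \<open>auto intro: DL_vector2 g\<close>)
  have gu: "DL (\<lambda>t. (grad2 y0 (?p t) *v (matrix_inv (blk2 (G (emb (?p t)))) *v vector [G (emb (?p t)) $ 1 $ 3, G (emb (?p t)) $ 2 $ 3])) $ i)" for i
    by (rule DL_mv[OF y u])
  have sq: "DL (\<lambda>t. sqrt (det (G (emb (?p t))) / det (blk2 (G (emb (?p t))))))"
    by (rule DL_sqrt, rule DL_divide) (use detpos[OF z] in \<open>auto intro: DL_mat_det g b2\<close>)
  have cr: "DL (\<lambda>t. cross3 (partial 1 y0 (?p t)) (partial 2 y0 (?p t)) $ i)" for i
    by (rule DL_cross) (rule DLY[OF z])+
  have ncr: "DL (\<lambda>t. inverse (norm (cross3 (partial 1 y0 (?p t)) (partial 2 y0 (?p t)))))"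
    by (rule DL_inverse, rule DL_norm, rule DL_vec, rule cr) (use b0pt[OF z] in auto)
  show ?thesis
    unfolding b0_def Gbar_def vector_add_component vector_scaleR_component real_scaleR_def
    by (intro DL_add DL_mult gu sq ncr cr)
qed

lemma (in setting) lineB: "z \<in> \<omega> \<Longrightarrow> lineD (b0 G y0) z c (partial c (b0 G y0) z)"
proof -
  assume z: "z \<in> \<omega>"
  have "DL (\<lambda>t. b0 G y0 (z + t *\<^sub>R axis c 1))" by (rule DL_vec, rule DLb0[OF z])
  then obtain v where "lineD (b0 G y0) z c v" using DL_lineD by blast
  then show ?thesis using lineD_partial by metis
qed

lemma DL_transform_open:
  fixes z :: "real^'n::finite" and f g :: "real^'n \<Rightarrow> 'b::real_normed_vector"
  assumes W: "open W" "z \<in> W" and eq: "\<forall>p\<in>W. f p = g p" and d: "DL (\<lambda>t. g (z + t *\<^sub>R axis c 1))"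
  shows "DL (\<lambda>t. f (z + t *\<^sub>R axis c 1))"
proof -
  obtain e where e: "e > 0" "ball z e \<subseteq> W" using W openE by blast
  show ?thesis unfolding DL_def
  proof (rule differentiable_transform_within[OF d[unfolded DL_def] e(1)])
    show "0 \<in> UNIV" by simp
    fix t :: real assume "dist t 0 < e"
    then have "z + t *\<^sub>R axis c 1 \<in> ball z e" by (simp add: dist_norm)
    then show "g (z + t *\<^sub>R axis c 1) = f (z + t *\<^sub>R axis c 1)" using e eq by auto
  qed
qed

definition Vd :: "(real^3 \<Rightarrow> real^3^3) \<Rightarrow> (real^2 \<Rightarrow> real^3) \<Rightarrow> 2 \<Rightarrow> 3 \<Rightarrow> real^2 \<Rightarrow> real^3" where
  "Vd G y0 c m z = (if m = 1 then partial c (partial 1 y0) z else if m = 2 then partial c (partial 2 y0) z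
                    else partial c (b0 G y0) z)"

definition vB :: "(real^3 \<Rightarrow> real^3^3) \<Rightarrow> (real^2 \<Rightarrow> real^3) \<Rightarrow> 2 \<Rightarrow> real^2 \<Rightarrow> real^3" where
  "vB G y0 c z = (\<chi> m. if m = 3 then (1/2) * partial (idx c) G (emb z) $ 3 $ 3
                   else partial (idx c) G (emb z) $ m $ 3 - Vd G y0 c m z \<bullet> b0 G y0 z)"

lemma (in setting) F1: "z \<in> \<omega> \<Longrightarrow> column m (Q0 G y0 z) \<bullet> column l (Q0 G y0 z) = G (emb z) $ m $ l"
proof -
  assume z: "z \<in> \<omega>"
  have e: "emb z \<in> cyl \<omega>" using z by (rule emb_cyl)
  have Y: "partial a y0 z \<bullet> partial b y0 z = G (emb z) $ idx a $ idx b" for a b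
    by (rule hypY[OF h1[rule_format, OF z]])
  note Ys = Y[of 1 1, unfolded idx_simps] Y[of 1 2, unfolded idx_simps] Y[of 2 1, unfolded idx_simps] Y[of 2 2, unfolded idx_simps]
  note s = sym_entry[OF symG[OF e]]
  note b = b0pt[OF z]
  have c: "column 1 (Q0 G y0 z) = partial 1 y0 z" "column 2 (Q0 G y0 z) = partial 2 y0 z"
    "column 3 (Q0 G y0 z) = b0 G y0 z" by (simp_all add: column_Q0)
  have bY: "b0 G y0 z \<bullet> partial 1 y0 z = G (emb z) $ 3 $ 1" "b0 G y0 z \<bullet> partial 2 y0 z = G (emb z) $ 3 $ 2"
    using b s[of 3 1] s[of 3 2] by (simp_all add: inner_commute)
  show ?thesis
    using exhaust_3[of m] exhaust_3[of l]
    apply (elim disjE)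
    apply (simp_all only: c Ys b bY)
    done
qed

lemma (in setting) QtQ: "z \<in> \<omega> \<Longrightarrow> transpose (Q0 G y0 z) ** Q0 G y0 z = G (emb z)"
  by (simp add: vec_eq_iff tmm_entry F1)

lemma (in setting) detQ: "z \<in> \<omega> \<Longrightarrow> det (Q0 G y0 z) \<noteq> 0 \<and> det (transpose (Q0 G y0 z)) \<noteq> 0"
proof -
  assume z: "z \<in> \<omega>"
  have "det (G (emb z)) = det (Q0 G y0 z) * det (Q0 G y0 z)"
    using QtQ[OF z] by (metis det_mul det_transpose)
  then show ?thesis using detpos[OF z] by (auto simp: det_transpose)
qed

lemma (in setting) lineQ: "z \<in> \<omega> \<Longrightarrow> lineD (\<lambda>p. column m (Q0 G y0 p)) z c (Vd G y0 c m z)"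
proof -
  assume z: "z \<in> \<omega>"
  show ?thesis
    using exhaust_3[of m]
    apply (elim disjE)
    subgoal unfolding column_Q0 Vd_def by (simp add: lineY[OF z])
    subgoal unfolding column_Q0 Vd_def by (simp add: lineY[OF z])
    subgoal unfolding column_Q0 Vd_def by (simp add: lineB[OF z])
    done
qed

lemma (in setting) D123: "z \<in> \<omega> \<Longrightarrow>
   Vd G y0 c m z \<bullet> column l (Q0 G y0 z) + column m (Q0 G y0 z) \<bullet> Vd G y0 c l z = partial (idx c) G (emb z) $ m $ l"
proof -
  assume z: "z \<in> \<omega>"
  show ?thesis
    by (rule lineD_unique_eq[OF om z _ lineD_inner[OF lineQ[OF z] lineQ[OF z]] lineD_nth2[OF lineG[OF z]]])
       (simp add: F1)
qed

lemma (in setting) Bformula: "z \<in> \<omega> \<Longrightarrow> partial c (b0 G y0) z = matrix_inv (transpose (Q0 G y0 z)) *v vB G y0 c z"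
proof -
  assume z: "z \<in> \<omega>"
  have "transpose (Q0 G y0 z) *v partial c (b0 G y0) z = vB G y0 c z"
  proof -
    have "column m (Q0 G y0 z) \<bullet> partial c (b0 G y0) z = vB G y0 c z $ m" for m
    proof -
      have d: "Vd G y0 c m z \<bullet> b0 G y0 z + column m (Q0 G y0 z) \<bullet> partial c (b0 G y0) z = partial (idx c) G (emb z) $ m $ 3"
        using D123[OF z, of c m 3] by (simp add: column_Q0 Vd_def)
      show ?thesis
      proof (cases "m = 3")
        case True
        then show ?thesis using d by (simp add: vB_def column_Q0 Vd_def inner_commute)
      next
        case False
        then show ?thesis using d by (simp add: vB_def)
      qed
    qed
    then show ?thesis unfolding vec_eq_iff tmv_entry by blast
  qed
  from matrix_inv_mv_eq[OF conjunct2[OF detQ[OF z]] this] show ?thesis by simp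
qed

lemma (in setting) DLQ: "z \<in> \<omega> \<Longrightarrow> DL (\<lambda>t. Q0 G y0 (z + t *\<^sub>R axis c 1) $ i $ j)"
proof -
  assume z: "z \<in> \<omega>"
  show ?thesis
    using exhaust_3[of j]
    apply (elim disjE)
    subgoal unfolding Q0_def by (simp add: DLY[OF z])
    subgoal unfolding Q0_def by (simp add: DLY[OF z])
    subgoal unfolding Q0_def by (simp add: DLb0[OF z])
    done
qed

lemma (in setting) DLQt: "z \<in> \<omega> \<Longrightarrow> DL (\<lambda>t. transpose (Q0 G y0 (z + t *\<^sub>R axis c 1)) $ i $ j)"
  unfolding transpose_def by (simp add: DLQ)

lemma (in setting) DLvB: "z \<in> \<omega> \<Longrightarrow> DL (\<lambda>t. vB G y0 c (z + t *\<^sub>R axis d 1) $ m)"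
proof -
  assume z: "z \<in> \<omega>"
  have b: "DL (\<lambda>t. b0 G y0 (z + t *\<^sub>R axis d 1))" by (rule DL_vec, rule DLb0[OF z])
  have y: "DL (\<lambda>t. partial c (partial a y0) (z + t *\<^sub>R axis d 1))" for a by (rule DL_vec, rule DLYY[OF z])
  have g: "DL (\<lambda>t. partial (idx c) G (emb (z + t *\<^sub>R axis d 1)) $ i $ j)" for i j by (rule DLPG[OF z])
  show ?thesis
    using exhaust_3[of m]
    apply (elim disjE)
    subgoal unfolding vB_def Vd_def by (simp, intro DL_diff g DL_inner y b)
    subgoal unfolding vB_def Vd_def by (simp, intro DL_diff g DL_inner y b)
    subgoal using DL_mult[OF DL_const[of "1/2"] g[of 3 3]] by (simp add: vB_def)
    done
qed

lemma (in setting) lineBB: "z \<in> \<omega> \<Longrightarrow> lineD (partial c (b0 G y0)) z d (partial d (partial c (b0 G y0)) z)"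
proof -
  assume z: "z \<in> \<omega>"
  have "DL (\<lambda>t. (matrix_inv (transpose (Q0 G y0 (z + t *\<^sub>R axis d 1))) *v vB G y0 c (z + t *\<^sub>R axis d 1)) $ k)" for k
    by (rule DL_invmv[OF DLQt[OF z]]) (use detQ[OF z] DLvB[OF z] in auto)
  then have fo: "DL (\<lambda>t. matrix_inv (transpose (Q0 G y0 (z + t *\<^sub>R axis d 1))) *v vB G y0 c (z + t *\<^sub>R axis d 1))"
    by (rule DL_vec)
  have "DL (\<lambda>t. partial c (b0 G y0) (z + t *\<^sub>R axis d 1))"
    by (rule DL_transform_open[OF om z _ fo]) (simp add: Bformula)
  then obtain v where "lineD (partial c (b0 G y0)) z d v" using DL_lineD by blast
  then show ?thesis using lineD_partial by metis
qed

lemma tAB_entry: "(transpose A ** B) $ a $ b = column a A \<bullet> column b (B::real^'n::finite^'k::finite)"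
  for A :: "real^'m::finite^'k"
  by (simp add: matrix_matrix_mult_def transpose_def column_def inner_vec_def mult.commute)

lemma mv_axis3: "(M *v axis 3 1) $ m = M $ m $ (3::3)" for M :: "real^3^3"
  by (simp add: matrix_vector_mult_def axis_def sum_3)

lemma col_idx_Q0: "column (idx a) (Q0 G y0 z) = partial a y0 z"
  using exhaust_2[of a] by (auto simp: column_Q0 idx_simps)

definition rhsD :: "(real^3 \<Rightarrow> real^3^3) \<Rightarrow> (real^2 \<Rightarrow> real^3) \<Rightarrow> real^2 \<Rightarrow> real^3" where
  "rhsD G y0 z = (let w = transpose (grad2 (b0 G y0) z) *v b0 G y0 z; dG = partial 3 G (emb z)
      in dG *v axis 3 1 - (1/2 * dG $ 3 $ 3) *\<^sub>R axis 3 1 - vector [w $ 1, w $ 2, 0])"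

lemma dtil0_rhs: "dtil0 G y0 z = matrix_inv (transpose (Q0 G y0 z)) *v rhsD G y0 z"
  unfolding dtil0_def rhsD_def Let_def ..

lemma axis3_nth: "(axis 3 1 :: real^3) $ 1 = 0" "(axis 3 1 :: real^3) $ 2 = 0" "(axis 3 1 :: real^3) $ 3 = 1"
  by (simp_all add: axis_def)

lemma sc_axis3: "(c *\<^sub>R axis 3 1 :: real^3) $ m = (if m = 3 then c else 0)"
  by (simp add: axis_def)

lemma rhsD_nth:
  "rhsD G y0 z $ 1 = partial 3 G (emb z) $ 1 $ 3 - partial 1 (b0 G y0) z \<bullet> b0 G y0 z"
  "rhsD G y0 z $ 2 = partial 3 G (emb z) $ 2 $ 3 - partial 2 (b0 G y0) z \<bullet> b0 G y0 z"
  "rhsD G y0 z $ 3 = (1/2) * partial 3 G (emb z) $ 3 $ 3"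
  by (simp_all add: rhsD_def Let_def mv_axis3 tmv_entry grad2_col sc_axis3 axis3_nth del: transpose_matrix_vector)

lemma (in setting) F3: "z \<in> \<omega> \<Longrightarrow> column m (Q0 G y0 z) \<bullet> dtil0 G y0 z = rhsD G y0 z $ m"
proof -
  assume z: "z \<in> \<omega>"
  have "transpose (Q0 G y0 z) *v dtil0 G y0 z = rhsD G y0 z"
    unfolding dtil0_rhs by (rule matrix_inv_mv) (use detQ[OF z] in auto)
  then show ?thesis by (metis tmv_entry)
qed

lemma (in setting) F3a: "z \<in> \<omega> \<Longrightarrow> partial a y0 z \<bullet> dtil0 G y0 z + partial a (b0 G y0) z \<bullet> b0 G y0 z = partial 3 G (emb z) $ idx a $ 3"
proof -
  assume z: "z \<in> \<omega>"
  show ?thesis using F3[OF z, of "idx a"] exhaust_2[of a]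
    by (auto simp: col_idx_Q0 idx_simps rhsD_nth)
qed

lemma (in setting) F3b: "z \<in> \<omega> \<Longrightarrow> b0 G y0 z \<bullet> dtil0 G y0 z = (1/2) * partial 3 G (emb z) $ 3 $ 3"
  using F3[of z 3] by (simp add: column_Q0 rhsD_nth)

lemma (in setting) DLBB: "z \<in> \<omega> \<Longrightarrow> DL (\<lambda>t. partial c (b0 G y0) (z + t *\<^sub>R axis d 1))"
  by (rule lineD_DL[OF lineBB])

lemma (in setting) lineDt: "z \<in> \<omega> \<Longrightarrow> lineD (dtil0 G y0) z c (partial c (dtil0 G y0) z)"
proof -
  assume z: "z \<in> \<omega>"
  have b: "DL (\<lambda>t. b0 G y0 (z + t *\<^sub>R axis c 1))" by (rule DL_vec, rule DLb0[OF z])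
  have bb: "DL (\<lambda>t. partial a (b0 G y0) (z + t *\<^sub>R axis c 1))" for a by (rule DLBB[OF z])
  have g: "DL (\<lambda>t. partial 3 G (emb (z + t *\<^sub>R axis c 1)) $ i $ j)" for i j by (rule DLPG[OF z])
  have r1: "DL (\<lambda>t. rhsD G y0 (z + t *\<^sub>R axis c 1) $ 1)"
    unfolding rhsD_nth by (intro DL_diff g DL_inner bb b)
  have r2: "DL (\<lambda>t. rhsD G y0 (z + t *\<^sub>R axis c 1) $ 2)"
    unfolding rhsD_nth by (intro DL_diff g DL_inner bb b)
  have r3: "DL (\<lambda>t. rhsD G y0 (z + t *\<^sub>R axis c 1) $ 3)"
    unfolding rhsD_nth by (intro DL_mult DL_const g)
  have r: "DL (\<lambda>t. rhsD G y0 (z + t *\<^sub>R axis c 1) $ m)" for m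
    using exhaust_3[of m] r1 r2 r3 by auto
  have "DL (\<lambda>t. (matrix_inv (transpose (Q0 G y0 (z + t *\<^sub>R axis c 1))) *v rhsD G y0 (z + t *\<^sub>R axis c 1)) $ k)" for k
    by (rule DL_invmv[OF DLQt[OF z]]) (use detQ[OF z] r in auto)
  then have "DL (\<lambda>t. dtil0 G y0 (z + t *\<^sub>R axis c 1))" unfolding dtil0_rhs by (rule DL_vec)
  then obtain v where "lineD (dtil0 G y0) z c v" using DL_lineD by blast
  then show ?thesis using lineD_partial by metis
qed

lemma (in setting) S2: "z \<in> \<omega> \<Longrightarrow>
   (partial c (partial a y0) z \<bullet> dtil0 G y0 z + partial a y0 z \<bullet> partial c (dtil0 G y0) z)
   + (partial c (partial a (b0 G y0)) z \<bullet> b0 G y0 z + partial a (b0 G y0) z \<bullet> partial c (b0 G y0) z)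
   = partial (idx c) (partial 3 G) (emb z) $ idx a $ 3"
proof -
  assume z: "z \<in> \<omega>"
  show ?thesis
    by (rule lineD_unique_eq[OF om z _ lineD_add[OF lineD_inner[OF lineY[OF z] lineDt[OF z]] lineD_inner[OF lineBB[OF z] lineB[OF z]]]
             lineD_nth2[OF linePG[OF z]]])
       (simp add: F3a)
qed

lemma (in setting) D33: "z \<in> \<omega> \<Longrightarrow> partial c (b0 G y0) z \<bullet> b0 G y0 z + b0 G y0 z \<bullet> partial c (b0 G y0) z = partial (idx c) G (emb z) $ 3 $ 3"
  using D123[of z c 3 3] by (simp add: Vd_def column_Q0)

lemma (in setting) S4: "z \<in> \<omega> \<Longrightarrow>
   (partial d (partial c (b0 G y0)) z \<bullet> b0 G y0 z + partial c (b0 G y0) z \<bullet> partial d (b0 G y0) z)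
   + (partial d (b0 G y0) z \<bullet> partial c (b0 G y0) z + b0 G y0 z \<bullet> partial d (partial c (b0 G y0)) z)
   = partial (idx d) (partial (idx c) G) (emb z) $ 3 $ 3"
proof -
  assume z: "z \<in> \<omega>"
  show ?thesis
    by (rule lineD_unique_eq[OF om z _ lineD_add[OF lineD_inner[OF lineBB[OF z] lineB[OF z]] lineD_inner[OF lineB[OF z] lineBB[OF z]]]
             lineD_nth2[OF linePG[OF z]]])
       (simp add: D33)
qed

lemma (in setting) H2: "z \<in> \<omega> \<Longrightarrow>
   partial a y0 z \<bullet> partial b (b0 G y0) z + partial b y0 z \<bullet> partial a (b0 G y0) z = partial 3 G (emb z) $ idx a $ idx b"
proof -
  assume z: "z \<in> \<omega>"
  have "msym (transpose (grad2 y0 z) ** grad2 (b0 G y0) z) $ a $ b = ((1/2) *\<^sub>R blk2 (partial 3 G (emb z))) $ a $ b"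
    using h2 z by simp
  then show ?thesis
    by (simp add: msym_def tAB_entry grad2_col blk2_def transpose_def[of "transpose (grad2 y0 z) ** grad2 (b0 G y0) z"])
qed

definition tn :: "3 \<Rightarrow> 2" where "tn m = (if m = 2 then 2 else 1)"

lemma idx_tn: "tn (idx c) = c" "idx c \<noteq> 3"
  using exhaust_2[of c] by (auto simp: tn_def idx_def)

lemma tn_simps: "tn 1 = 1" "tn 2 = 2" by (simp_all add: tn_def)

definition Vf :: "(real^3 \<Rightarrow> real^3^3) \<Rightarrow> (real^2 \<Rightarrow> real^3) \<Rightarrow> real^2 \<Rightarrow> 3 \<Rightarrow> 3 \<Rightarrow> real^3" where
  "Vf G y0 z k m = (if k = 3 then (if m = 3 then dtil0 G y0 z else partial (tn m) (b0 G y0) z)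
       else (if m = 3 then partial (tn k) (b0 G y0) z else partial (tn k) (partial (tn m) y0) z))"

lemma (in setting) Vf_sym: "z \<in> \<omega> \<Longrightarrow> Vf G y0 z k m = Vf G y0 z m k"
proof -
  assume z: "z \<in> \<omega>"
  have s: "partial i (partial j y0) z = partial j (partial i y0) z" for i j
    by (rule schwarz_vec[OF Vy(3) Vy(1)]) (use z Vy(2) in auto)
  show ?thesis unfolding Vf_def using s by auto
qed

lemma (in setting) Vd_Vf: "Vd G y0 c m z = Vf G y0 z (idx c) m"
  unfolding Vd_def Vf_def idx_tn
  using exhaust_3[of m] idx_tn(2)[of c] by (auto simp: tn_simps)

lemma (in setting) Ptan: "z \<in> \<omega> \<Longrightarrow> partial (idx c) G (emb z) $ m $ l =
   Vf G y0 z (idx c) m \<bullet> column l (Q0 G y0 z) + column m (Q0 G y0 z) \<bullet> Vf G y0 z (idx c) l"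
  using D123[of z c m l] by (simp add: Vd_Vf)

lemma (in setting) P3: "z \<in> \<omega> \<Longrightarrow> partial 3 G (emb z) $ m $ l =
   Vf G y0 z 3 m \<bullet> column l (Q0 G y0 z) + column m (Q0 G y0 z) \<bullet> Vf G y0 z 3 l"
proof -
  assume z: "z \<in> \<omega>"
  have e: "emb z \<in> cyl \<omega>" using z by (rule emb_cyl)
  note s = sym_entry[OF symP[OF e], of 3]
  note h = H2[OF z, of 1 1, unfolded idx_simps] H2[OF z, of 1 2, unfolded idx_simps]
           H2[OF z, of 2 1, unfolded idx_simps] H2[OF z, of 2 2, unfolded idx_simps]
  have f33: "partial 3 G (emb z) $ 3 $ 3 = 2 * (b0 G y0 z \<bullet> dtil0 G y0 z)" using F3b[OF z] by simp
  note f = F3a[OF z, of 1, unfolded idx_simps] F3a[OF z, of 2, unfolded idx_simps] F3b[OF z]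
  have c: "column 1 (Q0 G y0 z) = partial 1 y0 z" "column 2 (Q0 G y0 z) = partial 2 y0 z"
    "column 3 (Q0 G y0 z) = b0 G y0 z" by (simp_all add: column_Q0)
  show ?thesis
    using exhaust_3[of m] exhaust_3[of l]
    apply (elim disjE)
    apply (simp_all only: c Vf_def tn_simps if_True if_False simp_thms)
    apply (simp_all add: s h[symmetric] f[symmetric] f33 inner_commute)
    done
qed

lemma (in setting) Pall: "z \<in> \<omega> \<Longrightarrow> partial k G (emb z) $ m $ l =
   Vf G y0 z k m \<bullet> column l (Q0 G y0 z) + column m (Q0 G y0 z) \<bullet> Vf G y0 z k l"
  using exhaust_3[of k] Ptan[of z 1 m l] Ptan[of z 2 m l] P3[of z m l] by (auto simp: idx_simps)

lemma (in setting) chr_quad: "z \<in> \<omega> \<Longrightarrow>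
   (\<Sum>n\<in>UNIV. \<Sum>p\<in>UNIV. G (emb z) $ n $ p *
          (Christoffel G n k l (emb z) * Christoffel G p i m (emb z) - Christoffel G n k m (emb z) * Christoffel G p i l (emb z)))
   = Vf G y0 z k l \<bullet> Vf G y0 z i m - Vf G y0 z k m \<bullet> Vf G y0 z i l"
proof -
  assume z: "z \<in> \<omega>"
  show ?thesis
    by (rule riem_quad[where V="Vf G y0 z", OF QtQ[OF z, symmetric] conjunct1[OF detQ[OF z]] Vf_sym[OF z] Pall[OF z]])
qed

lemma IIbar_entry: "IIbar G y0 z $ a $ b =
   partial a (b0 G y0) z \<bullet> partial b (b0 G y0) z + partial a y0 z \<bullet> partial b (dtil0 G y0) z
   - (1/2) * partial 3 (partial 3 G) (emb z) $ idx a $ idx b"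
  by (simp add: IIbar_def tAB_entry grad2_col blk2_def)

lemma msym_entry: "msym M $ a $ b = (1/2) * (M $ a $ b + M $ b $ a)"
  by (simp add: msym_def transpose_def)

lemma (in setting) main_entry: "z \<in> \<omega> \<Longrightarrow> msym (IIbar G y0 z) $ a $ b = Riem G (idx a) 3 (idx b) 3 (emb z)"
proof -
  assume z: "z \<in> \<omega>"
  have e: "emb z \<in> cyl \<omega>" using z by (rule emb_cyl)
  have eU: "emb z \<in> UG" using e UG(2) by auto
  have zV: "z \<in> Vy" using z Vy(2) by auto
  have sy: "partial b (partial a y0) z = partial a (partial b y0) z"
    by (rule schwarz_vec[OF Vy(3) Vy(1) zV])
  have sG1: "partial 3 (partial (idx b) G) (emb z) = partial (idx b) (partial 3 G) (emb z)"
    by (rule schwarz_mat[OF UG(3) UG(1) eU])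
  have sG2: "partial (idx a) (partial (idx b) G) (emb z) = partial (idx b) (partial (idx a) G) (emb z)"
    by (rule schwarz_mat[OF UG(3) UG(1) eU])
  have sP: "partial (idx a) (partial 3 G) (emb z) $ 3 $ idx b = partial (idx a) (partial 3 G) (emb z) $ idx b $ 3"
    by (rule sym_entry[OF symPP[OF e]])
  have sH: "partial 3 (partial 3 G) (emb z) $ idx b $ idx a = partial 3 (partial 3 G) (emb z) $ idx a $ idx b"
    by (rule sym_entry[OF symPP[OF e]])
  note T1 = S2[OF z, of b a] and T2 = S2[OF z, of a b] and T4a = S4[OF z, of a b] and T4b = S4[OF z, of b a]
  have chr: "(\<Sum>n\<in>UNIV. \<Sum>p\<in>UNIV. G (emb z) $ n $ p *
          (Christoffel G n 3 (idx b) (emb z) * Christoffel G p (idx a) 3 (emb z) - Christoffel G n 3 3 (emb z) * Christoffel G p (idx a) (idx b) (emb z)))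
     = partial b (b0 G y0) z \<bullet> partial a (b0 G y0) z - dtil0 G y0 z \<bullet> partial a (partial b y0) z"
    using chr_quad[OF z, of 3 "idx b" "idx a" 3] by (simp add: Vf_def idx_tn)
  have R: "Riem G (idx a) 3 (idx b) 3 (emb z) =
     (1/2) * (partial (idx b) (partial 3 G) (emb z) $ idx a $ 3 + partial (idx a) (partial 3 G) (emb z) $ idx b $ 3
              - partial 3 (partial 3 G) (emb z) $ idx a $ idx b - partial (idx a) (partial (idx b) G) (emb z) $ 3 $ 3)
     + (partial b (b0 G y0) z \<bullet> partial a (b0 G y0) z - dtil0 G y0 z \<bullet> partial a (partial b y0) z)"
    unfolding Riem_def chr sG1 sP ..
  have c1: "partial b (b0 G y0) z \<bullet> partial a (b0 G y0) z = partial a (b0 G y0) z \<bullet> partial b (b0 G y0) z"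
    by (rule inner_commute)
  have c2: "b0 G y0 z \<bullet> partial a (partial b (b0 G y0)) z = partial a (partial b (b0 G y0)) z \<bullet> b0 G y0 z"
    by (rule inner_commute)
  have c3: "b0 G y0 z \<bullet> partial b (partial a (b0 G y0)) z = partial b (partial a (b0 G y0)) z \<bullet> b0 G y0 z"
    by (rule inner_commute)
  have c4: "dtil0 G y0 z \<bullet> partial a (partial b y0) z = partial a (partial b y0) z \<bullet> dtil0 G y0 z"
    by (rule inner_commute)
  show ?thesis
    unfolding msym_entry IIbar_entry R sH
    using T1 T2 T4a T4b sG2 c1 c2 c3 c4 sy by (simp add: algebra_simps)
qed

lemma (in setting) part2a: "z \<in> \<omega> \<Longrightarrow> msym (IIbar G y0 z) =
   transpose (grad2 (b0 G y0) z) ** grad2 (b0 G y0) z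
   + msym (transpose (grad2 y0 z) ** grad2 (dtil0 G y0) z)
   - (1/2) *\<^sub>R blk2 (partial 3 (partial 3 G) (emb z))"
proof -
  assume z: "z \<in> \<omega>"
  have e: "emb z \<in> cyl \<omega>" using z by (rule emb_cyl)
  have sH: "partial 3 (partial 3 G) (emb z) $ idx b $ idx a = partial 3 (partial 3 G) (emb z) $ idx a $ idx b" for a b
    by (rule sym_entry[OF symPP[OF e]])
  show ?thesis
    unfolding vec_eq_iff
    by (simp add: msym_entry IIbar_entry tAB_entry grad2_col blk2_def sH inner_commute algebra_simps)
qed

lemma (in setting) part2b: "z \<in> \<omega> \<Longrightarrow> msym (IIbar G y0 z) = Rmat G (emb z)"
proof -
  assume z: "z \<in> \<omega>"
  note m = main_entry[OF z]
  have s: "msym (IIbar G y0 z) $ 2 $ 1 = msym (IIbar G y0 z) $ 1 $ 2" by (simp add: msym_entry)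
  show ?thesis
    unfolding vec_eq_iff forall_2
    using m[of 1 1] m[of 2 2] m[of 1 2] s by (simp add: Rmat_def idx_simps)
qed

lemma proj_line: "proj (x + t *\<^sub>R axis (idx c) 1) = proj x + t *\<^sub>R axis c 1"
  using exhaust_2[of c] by (auto simp: proj_def idx_def vec_eq_iff forall_2 axis_def)

lemma line3: "(x + t *\<^sub>R axis (idx c) 1) $ 3 = (x::real^3) $ 3"
  using idx_tn(2)[of c] by (simp add: axis_def)

lemma mm_scaleR_right: "(A::real^'n::finite^'m::finite) ** (k *\<^sub>R B) = k *\<^sub>R (A ** (B::real^'p::finite^'n))"
  by (simp add: vec_eq_iff matrix_matrix_mult_def sum_distrib_left mult.left_commute)

lemma proj_cyl: "x \<in> cyl \<omega> \<Longrightarrow> proj x \<in> \<omega>"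
  by (simp add: cyl_def)

lemma (in setting) grad_tan_d0: "x \<in> cyl \<omega> \<Longrightarrow> grad_tan (d0 G y0) x = (x $ 3 ^ 2 / 2) *\<^sub>R grad2 (dtil0 G y0) (proj x)"
proof -
  assume x: "x \<in> cyl \<omega>"
  have l: "lineD (d0 G y0) x (idx c) ((x $ 3 ^ 2 / 2) *\<^sub>R partial c (dtil0 G y0) (proj x))" for c
  proof -
    have "lineD (\<lambda>p. (x $ 3 ^ 2 / 2) *\<^sub>R dtil0 G y0 p) (proj x) c ((x $ 3 ^ 2 / 2) *\<^sub>R partial c (dtil0 G y0) (proj x))"
      by (rule lineD_cmult[OF lineDt[OF proj_cyl[OF x]]])
    then show ?thesis unfolding lineD_def d0_def proj_line line3 .
  qed
  show ?thesis
    unfolding vec_eq_iff grad_tan_def grad2_def using lineD_partial[OF l] by simp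
qed

lemma (in setting) part1: "x \<in> cyl \<omega> \<Longrightarrow> II G y0 x = (x $ 3 ^ 2 / 2) *\<^sub>R IIbar G y0 (proj x)"
proof -
  assume x: "x \<in> cyl \<omega>"
  have "II G y0 x = (x $ 3 ^ 2 / 2) *\<^sub>R (transpose (grad2 (b0 G y0) (proj x)) ** grad2 (b0 G y0) (proj x))
     + (x $ 3 ^ 2 / 2) *\<^sub>R (transpose (grad2 y0 (proj x)) ** grad2 (dtil0 G y0) (proj x))
     - ((x $ 3 ^ 2 / 2) * (1/2)) *\<^sub>R blk2 (partial 3 (partial 3 G) (emb (proj x)))"
    unfolding II_def grad_tan_d0[OF x] mm_scaleR_right by (simp add: algebra_simps)
  also have "\<dots> = (x $ 3 ^ 2 / 2) *\<^sub>R IIbar G y0 (proj x)"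
    unfolding IIbar_def by (simp add: scaleR_add_right scaleR_diff_right)
  finally show ?thesis .
qed

theorem lemma7p2:
  fixes \<omega> :: "(real^2) set"
    and G :: "real^3 \<Rightarrow> real^3^3"
    and y0 :: "real^2 \<Rightarrow> real^3"
  assumes "open \<omega>" and "bounded \<omega>" and "connected \<omega>" and "lipschitz_boundary2 \<omega>"
    and "smooth_on_closure (cyl \<omega>) G"
    and "\<forall>x\<in>closure (cyl \<omega>). sym_pos_def (G x)"
    and "smooth_on_closure \<omega> y0"
    and "\<forall>x'\<in>\<omega>. transpose (grad2 y0 x') ** grad2 y0 x' = blk2 (Gbar G x')"
    and "\<forall>x'\<in>\<omega>. msym (transpose (grad2 y0 x') ** grad2 (b0 G y0) x')
                   = (1/2) *\<^sub>R blk2 (partial 3 G (emb x'))"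
  shows "(\<forall>x\<in>cyl \<omega>. II G y0 x = (x $ 3 ^ 2 / 2) *\<^sub>R IIbar G y0 (proj x))
     \<and> (\<forall>x'\<in>\<omega>.
          msym (IIbar G y0 x')
            = transpose (grad2 (b0 G y0) x') ** grad2 (b0 G y0) x'
              + msym (transpose (grad2 y0 x') ** grad2 (dtil0 G y0) x')
              - (1/2) *\<^sub>R blk2 (partial 3 (partial 3 G) (emb x'))
        \<and> msym (IIbar G y0 x') = Rmat G (emb x'))"
proof -
  obtain UG where UG: "open UG" "closure (cyl \<omega>) \<subseteq> UG" "smooth_on UG G"
    using assms(5) unfolding smooth_on_closure_def by blast
  obtain Vy where Vy: "open Vy" "closure \<omega> \<subseteq> Vy" "smooth_on Vy y0"
    using assms(7) unfolding smooth_on_closure_def by blast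
  have "setting \<omega> G y0 UG Vy"
  proof
    show "open \<omega>" by (rule assms(1))
    show "open UG" "smooth_on UG G" by (rule UG(1), rule UG(3))
    show "cyl \<omega> \<subseteq> UG" using UG(2) closure_subset by blast
    show "open Vy" "smooth_on Vy y0" by (rule Vy(1), rule Vy(3))
    show "\<omega> \<subseteq> Vy" using Vy(2) closure_subset by blast
    show "\<forall>x\<in>cyl \<omega>. sym_pos_def (G x)" using assms(6) closure_subset by blast
    show "\<forall>x'\<in>\<omega>. transpose (grad2 y0 x') ** grad2 y0 x' = blk2 (Gbar G x')" by (rule assms(8))
    show "\<forall>x'\<in>\<omega>. msym (transpose (grad2 y0 x') ** grad2 (b0 G y0) x') = (1/2) *\<^sub>R blk2 (partial 3 G (emb x'))"
      by (rule assms(9))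
  qed
  then interpret S: setting \<omega> G y0 UG Vy .
  show ?thesis using S.part1 S.part2a S.part2b by auto
qed

end
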